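(* Let $G$ be a group, $\omega$ a normalized 3-cocycle, $X,Y$ $G$-sets, and $\Psi_X,\Psi_Y$ as below. Let $(F,s):\mathcal M(X,\Psi_X)\to\mathcal M(Y,\Psi_Y)$ be a $\mathrm{Vec}_G^\omega$-module functor that preserves simple objects (i.e. $F(x)$ is simple for every simple $x$). Then there exist a $G$-equivariant map $f:X\to Y$ and a map $\Lambda:G\times X\to\mathbb F^\times$ satisfying $\Lambda(h,g^{-1}\cdot x)\Lambda^{-1}(gh,x)\Lambda(g,x)=\Psi_X^{-1}(g,h,x)\Psi_Y(g,h,f(x))$ for all $g,h\in G,x\in X$, such that $(F,s)$ is isomorphic as a module functor to $F_{f,\Lambda}$.
   Context: $\mathbb F$ algebraically closed. $\mathrm{Vec}_G^\omega$: finite-dimensional $G$-graded vector spaces, simple objects $\delta^g$, $\delta^g\otimes\delta^h=\delta^{gh}$, associator $\omega(g,h,k)\mathrm{id}$. For a $G$-set $X$ and normalized $\Psi:G\times G\times X\to\mathbb F^\times$ with $\Psi(h,k,g^{-1}\cdot x)\Psi^{-1}(gh,k,x)\Psi(g,hk,x)\Psi^{-1}(g,h,x)=\omega^{-1}(g,h,k)$, $\mathcal M(X,\Psi)$ is the category of finite-dimensional $X$-graded vector spaces (simple objects $x\in X$) with $\delta^g\triangleright x=g\cdot x$ and module constraint $m_{\delta^g,\delta^h,x}=\Psi(g,h,(gh)\cdot x)\mathrm{id}$. A module functor is an $\mathbb F$-linear functor with natural isomorphism $s_{C,M}:F(C\triangleright M)\to C\triangleright F(M)$ satisfying the module pentagon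 axiom; an isomorphism of module functors is a natural isomorphism $\eta$ with $s^H_{C,M}\circ\eta_{C\triangleright M}=(\mathrm{id}_C\triangleright\eta_M)\circ s^F_{C,M}$. For $f,\Lambda$ as in the claim, $F_{f,\Lambda}$ is the module functor with $F_{f,\Lambda}(x)=f(x)$ on simple objects (extended to an $\mathbb F$-linear functor) and coherence datum $s_{\delta^g,x}=\Lambda(g,g\cdot x)\,\mathrm{id}_{g\cdot f(x)}$. *)

theory Defs
  imports "HOL-Algebra.Group_Action" "HOL-Computational_Algebra.Polynomial"
begin

section \<open>Concrete model of graded vector spaces\<close>

text \<open>A finite-dimensional S-graded vector space is given (up to isomorphism) by a
finite basis together with a grading of the basis elements. Basis elements live in a
universal type closed under pairing, so that tensor products / actions have basis
the pairs of basis elements.\<close>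

datatype bt = Lf nat | Nd bt bt

type_synonym 'a gobj = "bt set \<times> (bt \<Rightarrow> 'a)"
type_synonym 'k mat = "bt \<Rightarrow> bt \<Rightarrow> 'k"

definition gobj :: "'a set \<Rightarrow> 'a gobj \<Rightarrow> bool" where
  "gobj S V \<longleftrightarrow> finite (fst V) \<and> snd V ` fst V \<subseteq> S"

text \<open>Morphisms V \<rightarrow> W: grading-preserving linear maps, as matrices indexed (row, column)
by (basis of W, basis of V).\<close>
definition ghom :: "'a gobj \<Rightarrow> 'a gobj \<Rightarrow> ('k::zero) mat set" where
  "ghom V W = {\<phi>. \<forall>w v. \<phi> w v \<noteq> 0 \<longrightarrow> w \<in> fst W \<and> v \<in> fst V \<and> snd W w = snd V v}"

definition mid :: "'a gobj \<Rightarrow> ('k::comm_ring_1) mat" where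
  "mid V = (\<lambda>w v. if w = v \<and> v \<in> fst V then 1 else 0)"

definition mcomp :: "'a gobj \<Rightarrow> ('k::comm_ring_1) mat \<Rightarrow> 'k mat \<Rightarrow> 'k mat" where
  "mcomp V \<psi> \<phi> = (\<lambda>w u. \<Sum>v\<in>fst V. \<psi> w v * \<phi> v u)"

definition iso_mor :: "'a gobj \<Rightarrow> 'a gobj \<Rightarrow> ('k::comm_ring_1) mat \<Rightarrow> bool" where
  "iso_mor V W \<phi> \<longleftrightarrow> \<phi> \<in> ghom V W \<and>
     (\<exists>\<psi>\<in>ghom W V. mcomp W \<psi> \<phi> = mid V \<and> mcomp V \<phi> \<psi> = mid W)"

definition simple_obj :: "'a gobj \<Rightarrow> bool" where
  "simple_obj V \<longleftrightarrow> card (fst V) = 1"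

definition sgrade :: "'a gobj \<Rightarrow> 'a" where
  "sgrade V = snd V (the_elem (fst V))"

section \<open>Vec_G^omega and its action on M(X,Psi)\<close>

definition gtens :: "('g, 'c) monoid_scheme \<Rightarrow> 'g gobj \<Rightarrow> 'g gobj \<Rightarrow> 'g gobj" where
  "gtens G C D = ({Nd a b | a b. a \<in> fst C \<and> b \<in> fst D},
     (\<lambda>t. case t of Nd a b \<Rightarrow> snd C a \<otimes>\<^bsub>G\<^esub> snd D b | Lf n \<Rightarrow> undefined))"

definition act :: "('g \<Rightarrow> 'x \<Rightarrow> 'x) \<Rightarrow> 'g gobj \<Rightarrow> 'x gobj \<Rightarrow> 'x gobj" where
  "act \<phi> C M = ({Nd a m | a m. a \<in> fst C \<and> m \<in> fst M},
     (\<lambda>t. case t of Nd a m \<Rightarrow> \<phi> (snd C a) (snd M m) | Lf n \<Rightarrow> undefined))"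

text \<open>Action of a pair of morphisms (f \<triangleright> \<phi>).\<close>
definition kron :: "('k::comm_ring_1) mat \<Rightarrow> 'k mat \<Rightarrow> 'k mat" where
  "kron f \<phi> = (\<lambda>u v. case u of
      Nd a m \<Rightarrow> (case v of Nd a' m' \<Rightarrow> f a a' * \<phi> m m' | Lf _ \<Rightarrow> 0)
    | Lf _ \<Rightarrow> 0)"

text \<open>Module constraint m_{C,D,M} : (C \<otimes> D) \<triangleright> M \<rightarrow> C \<triangleright> (D \<triangleright> M), given on simple
summands by m_{\<delta>^g,\<delta>^h,x} = \<Psi>(g,h,(gh)\<cdot>x) id.\<close>
definition mcon :: "('g, 'c) monoid_scheme \<Rightarrow> ('g \<Rightarrow> 'x \<Rightarrow> 'x) \<Rightarrow> ('g \<Rightarrow> 'g \<Rightarrow> 'x \<Rightarrow> 'k::comm_ring_1)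
    \<Rightarrow> 'g gobj \<Rightarrow> 'g gobj \<Rightarrow> 'x gobj \<Rightarrow> 'k mat" where
  "mcon G \<phi> \<Psi> C D M = (\<lambda>u v. case u of
      Nd a (Nd b m) \<Rightarrow>
        (if v = Nd (Nd a b) m \<and> a \<in> fst C \<and> b \<in> fst D \<and> m \<in> fst M
         then \<Psi> (snd C a) (snd D b) (\<phi> (snd C a \<otimes>\<^bsub>G\<^esub> snd D b) (snd M m)) else 0)
    | _ \<Rightarrow> 0)"

definition normalized_3cocycle :: "('g, 'c) monoid_scheme \<Rightarrow> ('g \<Rightarrow> 'g \<Rightarrow> 'g \<Rightarrow> 'k::field) \<Rightarrow> bool" where
  "normalized_3cocycle G \<omega> \<longleftrightarrow>
     (\<forall>g\<in>carrier G. \<forall>h\<in>carrier G. \<forall>k\<in>carrier G. \<omega> g h k \<noteq> 0) \<and>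
     (\<forall>g\<in>carrier G. \<forall>h\<in>carrier G. \<forall>k\<in>carrier G. \<forall>l\<in>carrier G.
        \<omega> h k l * \<omega> g (h \<otimes>\<^bsub>G\<^esub> k) l * \<omega> g h k
        = \<omega> (g \<otimes>\<^bsub>G\<^esub> h) k l * \<omega> g h (k \<otimes>\<^bsub>G\<^esub> l)) \<and>
     (\<forall>g\<in>carrier G. \<forall>h\<in>carrier G.
        \<omega> \<one>\<^bsub>G\<^esub> g h = 1 \<and> \<omega> g \<one>\<^bsub>G\<^esub> h = 1 \<and> \<omega> g h \<one>\<^bsub>G\<^esub> = 1)"

definition module_cochain :: "('g, 'c) monoid_scheme \<Rightarrow> 'x set \<Rightarrow> ('g \<Rightarrow> 'x \<Rightarrow> 'x)
    \<Rightarrow> ('g \<Rightarrow> 'g \<Rightarrow> 'g \<Rightarrow> 'k::field) \<Rightarrow> ('g \<Rightarrow> 'g \<Rightarrow> 'x \<Rightarrow> 'k) \<Rightarrow> bool" where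
  "module_cochain G X \<phi> \<omega> \<Psi> \<longleftrightarrow>
     (\<forall>g\<in>carrier G. \<forall>h\<in>carrier G. \<forall>x\<in>X. \<Psi> g h x \<noteq> 0) \<and>
     (\<forall>g\<in>carrier G. \<forall>x\<in>X. \<Psi> \<one>\<^bsub>G\<^esub> g x = 1 \<and> \<Psi> g \<one>\<^bsub>G\<^esub> x = 1) \<and>
     (\<forall>g\<in>carrier G. \<forall>h\<in>carrier G. \<forall>k\<in>carrier G. \<forall>x\<in>X.
        \<Psi> h k (\<phi> (inv\<^bsub>G\<^esub> g) x) * inverse (\<Psi> (g \<otimes>\<^bsub>G\<^esub> h) k x) * \<Psi> g (h \<otimes>\<^bsub>G\<^esub> k) x
          * inverse (\<Psi> g h x) = inverse (\<omega> g h k))"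

section \<open>Linear functors, module functors and their isomorphisms\<close>

definition lin_functor :: "'x set \<Rightarrow> 'y set \<Rightarrow> ('x gobj \<Rightarrow> 'y gobj)
    \<Rightarrow> ('x gobj \<Rightarrow> 'x gobj \<Rightarrow> ('k::comm_ring_1) mat \<Rightarrow> 'k mat) \<Rightarrow> bool" where
  "lin_functor X Y Fo Fm \<longleftrightarrow>
     (\<forall>V. gobj X V \<longrightarrow> gobj Y (Fo V)) \<and>
     (\<forall>V W \<phi>. gobj X V \<and> gobj X W \<and> \<phi> \<in> ghom V W \<longrightarrow> Fm V W \<phi> \<in> ghom (Fo V) (Fo W)) \<and>
     (\<forall>V. gobj X V \<longrightarrow> Fm V V (mid V) = mid (Fo V)) \<and>
     (\<forall>U V W \<phi> \<psi>. gobj X U \<and> gobj X V \<and> gobj X W \<and> \<phi> \<in> ghom U V \<and> \<psi> \<in> ghom V W \<longrightarrow>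
        Fm U W (mcomp V \<psi> \<phi>) = mcomp (Fo V) (Fm V W \<psi>) (Fm U V \<phi>)) \<and>
     (\<forall>V W \<phi> \<psi>. gobj X V \<and> gobj X W \<and> \<phi> \<in> ghom V W \<and> \<psi> \<in> ghom V W \<longrightarrow>
        Fm V W (\<lambda>w v. \<phi> w v + \<psi> w v) = (\<lambda>w v. Fm V W \<phi> w v + Fm V W \<psi> w v)) \<and>
     (\<forall>V W c \<phi>. gobj X V \<and> gobj X W \<and> \<phi> \<in> ghom V W \<longrightarrow>
        Fm V W (\<lambda>w v. c * \<phi> w v) = (\<lambda>w v. c * Fm V W \<phi> w v))"

definition module_functor :: "('g, 'c) monoid_scheme \<Rightarrow> 'x set \<Rightarrow> ('g \<Rightarrow> 'x \<Rightarrow> 'x)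
    \<Rightarrow> ('g \<Rightarrow> 'g \<Rightarrow> 'x \<Rightarrow> 'k::comm_ring_1) \<Rightarrow> 'y set \<Rightarrow> ('g \<Rightarrow> 'y \<Rightarrow> 'y) \<Rightarrow> ('g \<Rightarrow> 'g \<Rightarrow> 'y \<Rightarrow> 'k)
    \<Rightarrow> ('x gobj \<Rightarrow> 'y gobj) \<Rightarrow> ('x gobj \<Rightarrow> 'x gobj \<Rightarrow> 'k mat \<Rightarrow> 'k mat)
    \<Rightarrow> ('g gobj \<Rightarrow> 'x gobj \<Rightarrow> 'k mat) \<Rightarrow> bool" where
  "module_functor G X \<phi>X \<Psi>X Y \<phi>Y \<Psi>Y Fo Fm s \<longleftrightarrow>
     lin_functor X Y Fo Fm \<and>
     (\<forall>C M. gobj (carrier G) C \<and> gobj X M \<longrightarrow>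
        iso_mor (Fo (act \<phi>X C M)) (act \<phi>Y C (Fo M)) (s C M)) \<and>
     (\<forall>C C' M M' f \<phi>. gobj (carrier G) C \<and> gobj (carrier G) C' \<and> gobj X M \<and> gobj X M'
        \<and> f \<in> ghom C C' \<and> \<phi> \<in> ghom M M' \<longrightarrow>
        mcomp (Fo (act \<phi>X C' M')) (s C' M') (Fm (act \<phi>X C M) (act \<phi>X C' M') (kron f \<phi>))
        = mcomp (act \<phi>Y C (Fo M)) (kron f (Fm M M' \<phi>)) (s C M)) \<and>
     (\<forall>C D M. gobj (carrier G) C \<and> gobj (carrier G) D \<and> gobj X M \<longrightarrow>
        mcomp (act \<phi>Y C (Fo (act \<phi>X D M))) (kron (mid C) (s D M))
          (mcomp (Fo (act \<phi>X C (act \<phi>X D M))) (s C (act \<phi>X D M))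
             (Fm (act \<phi>X (gtens G C D) M) (act \<phi>X C (act \<phi>X D M)) (mcon G \<phi>X \<Psi>X C D M)))
        = mcomp (act \<phi>Y (gtens G C D) (Fo M)) (mcon G \<phi>Y \<Psi>Y C D (Fo M)) (s (gtens G C D) M))"

definition module_functor_iso :: "('g, 'c) monoid_scheme \<Rightarrow> 'x set \<Rightarrow> ('g \<Rightarrow> 'x \<Rightarrow> 'x)
    \<Rightarrow> ('g \<Rightarrow> 'y \<Rightarrow> 'y)
    \<Rightarrow> ('x gobj \<Rightarrow> 'y gobj) \<Rightarrow> ('x gobj \<Rightarrow> 'x gobj \<Rightarrow> ('k::comm_ring_1) mat \<Rightarrow> 'k mat)
    \<Rightarrow> ('g gobj \<Rightarrow> 'x gobj \<Rightarrow> 'k mat)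
    \<Rightarrow> ('x gobj \<Rightarrow> 'y gobj) \<Rightarrow> ('x gobj \<Rightarrow> 'x gobj \<Rightarrow> 'k mat \<Rightarrow> 'k mat)
    \<Rightarrow> ('g gobj \<Rightarrow> 'x gobj \<Rightarrow> 'k mat) \<Rightarrow> ('x gobj \<Rightarrow> 'k mat) \<Rightarrow> bool" where
  "module_functor_iso G X \<phi>X \<phi>Y Fo Fm sF Ho Hm sH \<eta> \<longleftrightarrow>
     (\<forall>V. gobj X V \<longrightarrow> iso_mor (Fo V) (Ho V) (\<eta> V)) \<and>
     (\<forall>V W \<phi>. gobj X V \<and> gobj X W \<and> \<phi> \<in> ghom V W \<longrightarrow>
        mcomp (Ho V) (Hm V W \<phi>) (\<eta> V) = mcomp (Fo W) (\<eta> W) (Fm V W \<phi>)) \<and>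
     (\<forall>C M. gobj (carrier G) C \<and> gobj X M \<longrightarrow>
        mcomp (Ho (act \<phi>X C M)) (sH C M) (\<eta> (act \<phi>X C M))
        = mcomp (act \<phi>Y C (Fo M)) (kron (mid C) (\<eta> M)) (sF C M))"

text \<open>(H,s^H) is (a realisation of) F_{f,\<Lambda>}: H(x) = f(x) on simple objects and
  s_{\<delta>^g,x} = \<Lambda>(g, g\<cdot>x) id.\<close>
definition is_F_f_Lambda :: "('g, 'c) monoid_scheme \<Rightarrow> 'x set \<Rightarrow> ('g \<Rightarrow> 'x \<Rightarrow> 'x)
    \<Rightarrow> ('g \<Rightarrow> 'y \<Rightarrow> 'y) \<Rightarrow> ('x \<Rightarrow> 'y) \<Rightarrow> ('g \<Rightarrow> 'x \<Rightarrow> 'k::comm_ring_1)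
    \<Rightarrow> ('x gobj \<Rightarrow> 'y gobj) \<Rightarrow> ('g gobj \<Rightarrow> 'x gobj \<Rightarrow> 'k mat) \<Rightarrow> bool" where
  "is_F_f_Lambda G X \<phi>X \<phi>Y f \<Lambda> Ho sH \<longleftrightarrow>
     (\<forall>V. gobj X V \<and> simple_obj V \<longrightarrow> simple_obj (Ho V) \<and> sgrade (Ho V) = f (sgrade V)) \<and>
     (\<forall>C M. gobj (carrier G) C \<and> simple_obj C \<and> gobj X M \<and> simple_obj M \<longrightarrow>
        sH C M (the_elem (fst (act \<phi>Y C (Ho M)))) (the_elem (fst (Ho (act \<phi>X C M))))
        = \<Lambda> (sgrade C) (\<phi>X (sgrade C) (sgrade M)))"

definition alg_closed :: "'k::field itself \<Rightarrow> bool" where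
  "alg_closed _ \<longleftrightarrow> (\<forall>p :: 'k poly. degree p \<ge> 1 \<longrightarrow> (\<exists>z. poly p z = 0))"

end

theory Submission
  imports Defs
begin


lemma mcomp_assoc: "mcomp V a (mcomp U b c) = mcomp U (mcomp V a b) c"
  unfolding mcomp_def
  by (auto simp: sum_distrib_left sum_distrib_right mult.assoc intro!: ext sum.swap)

lemma ghomD: "\<phi> \<in> ghom V W \<Longrightarrow> \<phi> w v \<noteq> 0 \<Longrightarrow> w \<in> fst W \<and> v \<in> fst V \<and> snd W w = snd V v"
  unfolding ghom_def by blast

lemma mcomp_mid_left:
  assumes "finite (fst W)" "\<phi> \<in> ghom V W"
  shows "mcomp W (mid W) \<phi> = (\<phi>::'k::comm_ring_1 mat)"
proof (intro ext)
  fix w u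
  have "mcomp W (mid W) \<phi> w u = (if w \<in> fst W then \<phi> w u else 0)"
    unfolding mcomp_def mid_def using assms(1)
    by (simp add: if_distrib[where f="\<lambda>x. x * _"] sum.delta cong: if_cong)
  also have "\<dots> = \<phi> w u" using ghomD[OF assms(2)] by auto
  finally show "mcomp W (mid W) \<phi> w u = \<phi> w u" .
qed

lemma mcomp_mid_right:
  assumes "finite (fst V)" "\<phi> \<in> ghom V W"
  shows "mcomp V \<phi> (mid V) = (\<phi>::'k::comm_ring_1 mat)"
proof (intro ext)
  fix w u
  have "mcomp V \<phi> (mid V) w u = (if u \<in> fst V then \<phi> w u else 0)"
    unfolding mcomp_def mid_def using assms(1)
    by (simp add: if_distrib[where f="\<lambda>x. _ * x"] sum.delta' cong: if_cong)
  also have "\<dots> = \<phi> w u" using ghomD[OF assms(2)] by auto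
  finally show "mcomp V \<phi> (mid V) w u = \<phi> w u" .
qed

lemma mid_ghom: "mid V \<in> ghom V V"
  unfolding mid_def ghom_def by auto

lemma mcomp_ghom:
  assumes "\<phi> \<in> ghom U V" "\<psi> \<in> ghom V W"
  shows "mcomp V \<psi> \<phi> \<in> ghom U W"
  unfolding ghom_def
proof (intro CollectI allI impI)
  fix w u assume "mcomp V \<psi> \<phi> w u \<noteq> 0"
  then obtain v where "v \<in> fst V" "\<psi> w v * \<phi> v u \<noteq> 0"
    unfolding mcomp_def by (meson sum.neutral)
  then have "\<psi> w v \<noteq> 0" "\<phi> v u \<noteq> 0" by auto
  with \<open>v \<in> fst V\<close> show "w \<in> fst W \<and> u \<in> fst U \<and> snd W w = snd U u"
    using ghomD[OF assms(1), of v u] ghomD[OF assms(2), of w v] by auto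
qed

lemma iso_mor_comp:
  assumes "iso_mor U V \<phi>" "iso_mor V W \<psi>" "finite (fst U)" "finite (fst V)" "finite (fst W)"
  shows "iso_mor U W (mcomp V \<psi> (\<phi>::'k::comm_ring_1 mat))"
proof -
  obtain \<phi>i where p: "\<phi> \<in> ghom U V" "\<phi>i \<in> ghom V U" "mcomp V \<phi>i \<phi> = mid U" "mcomp U \<phi> \<phi>i = mid V"
    using assms(1) unfolding iso_mor_def by blast
  obtain \<psi>i where q: "\<psi> \<in> ghom V W" "\<psi>i \<in> ghom W V" "mcomp W \<psi>i \<psi> = mid V" "mcomp V \<psi> \<psi>i = mid W"
    using assms(2) unfolding iso_mor_def by blast
  have "mcomp W (mcomp V \<phi>i \<psi>i) (mcomp V \<psi> \<phi>) = mcomp V \<phi>i (mcomp W \<psi>i (mcomp V \<psi> \<phi>))"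
    by (simp only: mcomp_assoc)
  also have "\<dots> = mcomp V \<phi>i (mcomp V (mcomp W \<psi>i \<psi>) \<phi>)" by (simp only: mcomp_assoc)
  also have "\<dots> = mcomp V \<phi>i \<phi>" by (simp add: q mcomp_mid_left[OF assms(4) p(1)])
  finally have 1: "mcomp W (mcomp V \<phi>i \<psi>i) (mcomp V \<psi> \<phi>) = mid U" using p by simp
  have "mcomp U (mcomp V \<psi> \<phi>) (mcomp V \<phi>i \<psi>i) = mcomp V \<psi> (mcomp U \<phi> (mcomp V \<phi>i \<psi>i))"
    by (simp only: mcomp_assoc)
  also have "\<dots> = mcomp V \<psi> (mcomp V (mcomp U \<phi> \<phi>i) \<psi>i)" by (simp only: mcomp_assoc)
  also have "\<dots> = mcomp V \<psi> \<psi>i" by (simp add: p mcomp_mid_left[OF assms(4) q(2)])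
  finally have 2: "mcomp U (mcomp V \<psi> \<phi>) (mcomp V \<phi>i \<psi>i) = mid W" using q by simp
  show ?thesis unfolding iso_mor_def
    using 1 2 mcomp_ghom p q by blast
qed

lemma fst_act: "fst (act \<psi> C M) = (\<lambda>(a,m). Nd a m) ` (fst C \<times> fst M)"
  unfolding act_def by auto

lemma snd_act_Nd: "snd (act \<psi> C M) (Nd a m) = \<psi> (snd C a) (snd M m)"
  unfolding act_def by simp

lemma Nd_in_act: "Nd a m \<in> fst (act \<psi> C M) \<longleftrightarrow> a \<in> fst C \<and> m \<in> fst M"
  unfolding act_def by auto

lemma Lf_notin_act: "Lf n \<notin> fst (act \<psi> C M)"
  unfolding act_def by auto

lemma finite_act: "finite (fst C) \<Longrightarrow> finite (fst M) \<Longrightarrow> finite (fst (act \<psi> C M))"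
  unfolding fst_act by auto

lemma fst_gtens: "fst (gtens G C D) = (\<lambda>(a,m). Nd a m) ` (fst C \<times> fst D)"
  unfolding gtens_def by auto

lemma snd_gtens_Nd: "snd (gtens G C D) (Nd a b) = snd C a \<otimes>\<^bsub>G\<^esub> snd D b"
  unfolding gtens_def by simp

lemma Nd_in_gtens: "Nd a m \<in> fst (gtens G C M) \<longleftrightarrow> a \<in> fst C \<and> m \<in> fst M"
  unfolding gtens_def by auto

lemma finite_gtens: "finite (fst C) \<Longrightarrow> finite (fst M) \<Longrightarrow> finite (fst (gtens G C M))"
  unfolding fst_gtens by auto

lemma kron_ghom:
  assumes "f \<in> ghom C C'" "\<phi> \<in> ghom M M'"
  shows "kron f \<phi> \<in> ghom (act \<psi> C M) (act \<psi> C' M')"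
  unfolding ghom_def
proof (intro CollectI allI impI)
  fix w v assume nz: "kron f \<phi> w v \<noteq> 0"
  then obtain a m a' m' where wv: "w = Nd a m" "v = Nd a' m'"
    unfolding kron_def by (auto split: bt.splits)
  with nz have "f a a' \<noteq> 0" "\<phi> m m' \<noteq> 0" unfolding kron_def by auto
  then show "w \<in> fst (act \<psi> C' M') \<and> v \<in> fst (act \<psi> C M) \<and> snd (act \<psi> C' M') w = snd (act \<psi> C M) v"
    using ghomD[OF assms(1)] ghomD[OF assms(2)] wv
    by (simp add: Nd_in_act snd_act_Nd)
qed

lemma kron_mcomp:
  "mcomp (act \<psi> C' M') (kron f g) (kron f' h) = kron (mcomp C' f f') (mcomp M' g (h::'k::comm_ring_1 mat))"
proof (intro ext)
  fix w u
  have inj: "inj_on (\<lambda>(a,m). Nd a m) (fst C' \<times> fst M')" by (auto simp: inj_on_def)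
  show "mcomp (act \<psi> C' M') (kron f g) (kron f' h) w u = kron (mcomp C' f f') (mcomp M' g h) w u"
  proof (cases w; cases u)
    fix a m a' m' assume wu: "w = Nd a m" "u = Nd a' m'"
    have "mcomp (act \<psi> C' M') (kron f g) (kron f' h) w u
        = (\<Sum>p\<in>fst C' \<times> fst M'. kron f g w (case p of (x,y) \<Rightarrow> Nd x y) * kron f' h (case p of (x,y) \<Rightarrow> Nd x y) u)"
      unfolding mcomp_def fst_act by (simp add: sum.reindex[OF inj] comp_def)
    also have "\<dots> = (\<Sum>p\<in>fst C' \<times> fst M'. (f a (fst p) * f' (fst p) a') * (g m (snd p) * h (snd p) m'))"
      by (intro sum.cong) (auto simp: wu kron_def mult_ac)
    also have "\<dots> = (\<Sum>x\<in>fst C'. f a x * f' x a') * (\<Sum>y\<in>fst M'. g m y * h y m')"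
      by (simp add: sum_product sum.cartesian_product split_def)
    also have "\<dots> = kron (mcomp C' f f') (mcomp M' g h) w u"
      by (simp add: wu kron_def mcomp_def)
    finally show ?thesis .
  qed (auto simp: kron_def mcomp_def intro!: sum.neutral split: bt.splits)
qed

lemma kron_mid: "kron (mid C) (mid M) = (mid (act \<psi> C M) :: 'k::comm_ring_1 mat)"
  by (intro ext) (auto simp: kron_def mid_def Nd_in_act Lf_notin_act split: bt.splits)

lemma kron_iso:
  assumes "iso_mor M M' \<phi>" "finite (fst C)"
  shows "iso_mor (act \<psi> C M) (act \<psi> C M') (kron (mid C) (\<phi>::'k::comm_ring_1 mat))"
proof -
  obtain \<phi>i where p: "\<phi> \<in> ghom M M'" "\<phi>i \<in> ghom M' M" "mcomp M' \<phi>i \<phi> = mid M" "mcomp M \<phi> \<phi>i = mid M'"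
    using assms(1) unfolding iso_mor_def by blast
  have mm: "mcomp C (mid C) (mid C) = (mid C :: 'k mat)"
    using mcomp_mid_left[OF assms(2) mid_ghom] .
  show ?thesis unfolding iso_mor_def
    apply (intro conjI bexI[of _ "kron (mid C) \<phi>i"])
    using p by (auto simp: kron_ghom mid_ghom kron_mcomp mm kron_mid)
qed

lemma mcomp_col_single:
  assumes "finite (fst V)" "\<And>z. z \<noteq> zz \<Longrightarrow> B z v = 0"
  shows "mcomp V A B w v = (if zz \<in> fst V then A w zz * B zz v else (0::'k::comm_ring_1))"
proof -
  have "mcomp V A B w v = (\<Sum>z\<in>fst V. if z = zz then A w zz * B zz v else 0)"
    unfolding mcomp_def by (intro sum.cong) (auto simp: assms)
  also have "\<dots> = (if zz \<in> fst V then A w zz * B zz v else 0)"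
    using assms(1) by (auto simp: sum.delta)
  finally show ?thesis .
qed

lemma mcomp_row_single:
  assumes "finite (fst V)" "\<And>z. z \<noteq> zz \<Longrightarrow> A w z = 0"
  shows "mcomp V A B w v = (if zz \<in> fst V then A w zz * B zz v else (0::'k::comm_ring_1))"
proof -
  have "mcomp V A B w v = (\<Sum>z\<in>fst V. if z = zz then A w zz * B zz v else 0)"
    unfolding mcomp_def by (intro sum.cong) (auto simp: assms)
  also have "\<dots> = (if zz \<in> fst V then A w zz * B zz v else 0)"
    using assms(1) by (auto simp: sum.delta)
  finally show ?thesis .
qed

lemma mcomp_zero_col: "(\<And>z. B z v = 0) \<Longrightarrow> mcomp V A B w v = (0::'k::comm_ring_1)"
  unfolding mcomp_def by simp

lemma mcomp_zero_row: "(\<And>z. A w z = 0) \<Longrightarrow> mcomp V A B w v = (0::'k::comm_ring_1)"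
  unfolding mcomp_def by simp

lemma mcon_Nd: "mcon G p \<Psi> C D M (Nd a (Nd b m)) v = (if v = Nd (Nd a b) m \<and> a \<in> fst C \<and> b \<in> fst D \<and> m \<in> fst M
   then \<Psi> (snd C a) (snd D b) (p (snd C a \<otimes>\<^bsub>G\<^esub> snd D b) (snd M m)) else 0)"
  unfolding mcon_def by simp

lemma mcon_other: "(\<nexists>a b m. z = Nd a (Nd b m)) \<Longrightarrow> mcon G p \<Psi> C D M z v = 0"
  unfolding mcon_def by (auto split: bt.splits)

lemma mcon_col: "mcon G p \<Psi> C D M z (Nd (Nd a b) m) \<noteq> 0 \<Longrightarrow> z = Nd a (Nd b m)"
  unfolding mcon_def by (auto split: bt.splits if_splits)

lemma mcon_col_zero: "(\<nexists>a b m. v = Nd (Nd a b) m) \<Longrightarrow> mcon G p \<Psi> C D M z v = 0"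
  unfolding mcon_def by (auto split: bt.splits)

lemma mcon_ghom:
  assumes "group_action G X p" "gobj (carrier G) C" "gobj (carrier G) D" "gobj X M"
  shows "mcon G p \<Psi> C D M \<in> ghom (act p (gtens G C D) M) (act p C (act p D M))"
  unfolding ghom_def
proof (intro CollectI allI impI)
  fix w v assume nz: "mcon G p \<Psi> C D M w v \<noteq> 0"
  then obtain a b m where w: "w = Nd a (Nd b m)" using mcon_other by blast
  with nz have v: "v = Nd (Nd a b) m" "a \<in> fst C" "b \<in> fst D" "m \<in> fst M"
    by (auto simp: mcon_Nd split: if_splits)
  have "snd C a \<in> carrier G" "snd D b \<in> carrier G" "snd M m \<in> X"
    using assms v unfolding gobj_def by auto
  then have "p (snd C a \<otimes>\<^bsub>G\<^esub> snd D b) (snd M m) = p (snd C a) (p (snd D b) (snd M m))"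
    using group_action.composition_rule[OF assms(1)] by blast
  then show "w \<in> fst (act p C (act p D M)) \<and> v \<in> fst (act p (gtens G C D) M) \<and>
      snd (act p C (act p D M)) w = snd (act p (gtens G C D) M) v"
    using v w by (simp add: Nd_in_act Nd_in_gtens snd_act_Nd snd_gtens_Nd)
qed

lemma mcon_nat:
  assumes "h \<in> ghom M M'" "finite (fst C)" "finite (fst D)" "finite (fst M)" "finite (fst M')"
  shows "mcomp (act p C (act p D M)) (kron (mid C) (kron (mid D) h)) (mcon G p \<Psi> C D M)
       = mcomp (act p (gtens G C D) M') (mcon G p \<Psi> C D M') (kron (mid (gtens G C D)) (h::'k::comm_ring_1 mat))"
proof (intro ext)
  fix w v
  show "mcomp (act p C (act p D M)) (kron (mid C) (kron (mid D) h)) (mcon G p \<Psi> C D M) w v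
       = mcomp (act p (gtens G C D) M') (mcon G p \<Psi> C D M') (kron (mid (gtens G C D)) h) w v"
  proof (cases "\<exists>a b m. w = Nd a (Nd b m)")
    case False
    have "mcomp (act p (gtens G C D) M') (mcon G p \<Psi> C D M') (kron (mid (gtens G C D)) h) w v = 0"
      by (rule mcomp_zero_row) (simp add: mcon_other False)
    moreover have "mcomp (act p C (act p D M)) (kron (mid C) (kron (mid D) h)) (mcon G p \<Psi> C D M) w v = 0"
      using False by (intro mcomp_zero_row) (auto simp: kron_def split: bt.splits)
    ultimately show ?thesis by simp
  next
    case True
    then obtain a b m' where w: "w = Nd a (Nd b m')" by blast
    show ?thesis
    proof (cases "\<exists>a b m. v = Nd (Nd a b) m")
      case False
      have "mcomp (act p C (act p D M)) (kron (mid C) (kron (mid D) h)) (mcon G p \<Psi> C D M) w v = 0"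
        by (rule mcomp_zero_col) (simp add: mcon_col_zero False)
      moreover have "mcomp (act p (gtens G C D) M') (mcon G p \<Psi> C D M') (kron (mid (gtens G C D)) h) w v = 0"
        using False by (intro mcomp_zero_col) (auto simp: kron_def mid_def fst_gtens split: bt.splits)
      ultimately show ?thesis by simp
    next
      case True
      then obtain a1 b1 m1 where v: "v = Nd (Nd a1 b1) m1" by blast
      have L: "mcomp (act p C (act p D M)) (kron (mid C) (kron (mid D) h)) (mcon G p \<Psi> C D M) w v
        = (if a = a1 \<and> b = b1 \<and> a \<in> fst C \<and> b \<in> fst D \<and> m1 \<in> fst M then
            h m' m1 * \<Psi> (snd C a) (snd D b) (p (snd C a \<otimes>\<^bsub>G\<^esub> snd D b) (snd M m1)) else 0)"
        by (subst mcomp_col_single[where zz="Nd a1 (Nd b1 m1)"])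
           (auto simp: v w mcon_Nd Nd_in_act kron_def mid_def finite_act assms dest: mcon_col)
      have R: "mcomp (act p (gtens G C D) M') (mcon G p \<Psi> C D M') (kron (mid (gtens G C D)) h) w v
        = (if a = a1 \<and> b = b1 \<and> a \<in> fst C \<and> b \<in> fst D \<and> m' \<in> fst M' then
            \<Psi> (snd C a) (snd D b) (p (snd C a \<otimes>\<^bsub>G\<^esub> snd D b) (snd M' m')) * h m' m1 else 0)"
        by (subst mcomp_row_single[where zz="Nd (Nd a b) m'"])
           (auto simp: v w mcon_Nd Nd_in_act Nd_in_gtens kron_def mid_def finite_act finite_gtens assms)
      show ?thesis unfolding L R
        using ghomD[OF assms(1), of m' m1] by (cases "h m' m1 = 0") (auto simp: mult.commute)
    qed
  qed
qed

lemma mcomp_add_left: "mcomp V (\<lambda>w v. A w v + B w v) C = (\<lambda>w v. mcomp V A C w v + mcomp V B C w v)"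
  unfolding mcomp_def by (auto simp: distrib_right sum.distrib intro!: ext)

lemma mcomp_add_right: "mcomp V C (\<lambda>w v. A w v + B w v) = (\<lambda>w v. mcomp V C A w v + mcomp V C B w v)"
  unfolding mcomp_def by (auto simp: distrib_left sum.distrib intro!: ext)

lemma mcomp_smult_left: "mcomp V (\<lambda>w v. c * A w v) C = (\<lambda>w v. c * mcomp V A C w v)"
  unfolding mcomp_def by (auto simp: sum_distrib_left mult.assoc intro!: ext)

lemma mcomp_smult_right: "mcomp V C (\<lambda>w v. c * A w v) = (\<lambda>w v. c * mcomp V C A w v)"
  unfolding mcomp_def by (auto simp: sum_distrib_left mult_ac intro!: ext)

lemma cancel_mid:
  assumes "mcomp V b a = mid V" "finite (fst V)" "Y \<in> ghom U V"
  shows "mcomp V (mcomp V X b) (mcomp V a Y) = mcomp V X (Y::'k::comm_ring_1 mat)"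
proof -
  have "mcomp V (mcomp V X b) (mcomp V a Y) = mcomp V X (mcomp V (mcomp V b a) Y)"
    by (simp only: mcomp_assoc)
  also have "\<dots> = mcomp V X Y" using assms by (simp add: mcomp_mid_left)
  finally show ?thesis .
qed

lemma kron_mid_mcomp:
  assumes "finite (fst C)"
  shows "kron (mid C) (mcomp M' g h) = mcomp (act \<psi> C M') (kron (mid C) g) (kron (mid C) (h::'k::comm_ring_1 mat))"
  by (simp add: kron_mcomp mcomp_mid_left[OF assms mid_ghom])

lemma iso_morD:
  assumes "iso_mor V W \<phi>"
  shows "\<phi> \<in> ghom V W"
  using assms unfolding iso_mor_def by blast

lemma gobj_act:
  assumes "group_action G X p" "gobj (carrier G) C" "gobj X M"
  shows "gobj X (act p C M)"
  using assms unfolding gobj_def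
  by (auto simp: fst_act snd_act_Nd image_subset_iff intro!: group_action.element_image[OF assms(1) _ _ refl])

lemma gobj_gtens:
  assumes "group G" "gobj (carrier G) C" "gobj (carrier G) D"
  shows "gobj (carrier G) (gtens G C D)"
  using assms unfolding gobj_def
  by (auto simp: fst_gtens snd_gtens_Nd image_subset_iff intro!: monoid.m_closed[OF group.is_monoid[OF assms(1)]])

lemma transport:
  fixes \<eta> \<eta>i :: "'x gobj \<Rightarrow> 'k::comm_ring_1 mat"
  assumes MF: "module_functor G X \<phi>X \<Psi>X Y \<phi>Y \<Psi>Y Fo Fm s"
    and GA: "group_action G X \<phi>X" and GG: "group G"
    and eta: "\<And>V. gobj X V \<Longrightarrow> \<eta> V \<in> ghom (Fo V) (Fo V) \<and> \<eta>i V \<in> ghom (Fo V) (Fo V)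
        \<and> mcomp (Fo V) (\<eta> V) (\<eta>i V) = mid (Fo V) \<and> mcomp (Fo V) (\<eta>i V) (\<eta> V) = mid (Fo V)"
    and Hm_def: "Hm = (\<lambda>V W \<phi>. mcomp (Fo W) (\<eta> W) (mcomp (Fo V) (Fm V W \<phi>) (\<eta>i V)))"
    and sH_def: "sH = (\<lambda>C M. mcomp (act \<phi>Y C (Fo M)) (kron (mid C) (\<eta> M))
                   (mcomp (Fo (act \<phi>X C M)) (s C M) (\<eta>i (act \<phi>X C M))))"
  shows "module_functor G X \<phi>X \<Psi>X Y \<phi>Y \<Psi>Y Fo Hm sH \<and> module_functor_iso G X \<phi>X \<phi>Y Fo Fm s Fo Hm sH \<eta>"
proof -
  note MF' = MF[unfolded module_functor_def lin_functor_def]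
  have Fobj: "\<And>V. gobj X V \<Longrightarrow> gobj Y (Fo V)" using MF' by (elim conjE) blast
  have Fghom: "\<And>V W \<phi>. gobj X V \<Longrightarrow> gobj X W \<Longrightarrow> \<phi> \<in> ghom V W \<Longrightarrow> Fm V W \<phi> \<in> ghom (Fo V) (Fo W)"
    using MF' by (elim conjE) blast
  have Fmid: "\<And>V. gobj X V \<Longrightarrow> Fm V V (mid V) = mid (Fo V)" using MF' by (elim conjE) blast
  have Fcomp: "\<And>U V W \<phi> \<psi>. gobj X U \<Longrightarrow> gobj X V \<Longrightarrow> gobj X W \<Longrightarrow> \<phi> \<in> ghom U V \<Longrightarrow> \<psi> \<in> ghom V W \<Longrightarrow>
        Fm U W (mcomp V \<psi> \<phi>) = mcomp (Fo V) (Fm V W \<psi>) (Fm U V \<phi>)" using MF' by (elim conjE) blast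
  have Fadd: "\<And>V W \<phi> \<psi>. gobj X V \<Longrightarrow> gobj X W \<Longrightarrow> \<phi> \<in> ghom V W \<Longrightarrow> \<psi> \<in> ghom V W \<Longrightarrow>
        Fm V W (\<lambda>w v. \<phi> w v + \<psi> w v) = (\<lambda>w v. Fm V W \<phi> w v + Fm V W \<psi> w v)" using MF' by (elim conjE) blast
  have Fsm: "\<And>V W c \<phi>. gobj X V \<Longrightarrow> gobj X W \<Longrightarrow> \<phi> \<in> ghom V W \<Longrightarrow>
        Fm V W (\<lambda>w v. c * \<phi> w v) = (\<lambda>w v. c * Fm V W \<phi> w v)" using MF' by (elim conjE) blast
  have siso: "\<And>C M. gobj (carrier G) C \<Longrightarrow> gobj X M \<Longrightarrow> iso_mor (Fo (act \<phi>X C M)) (act \<phi>Y C (Fo M)) (s C M)"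
    using MF' by (elim conjE) blast
  have snat: "\<And>C C' M M' f \<phi>. gobj (carrier G) C \<Longrightarrow> gobj (carrier G) C' \<Longrightarrow> gobj X M \<Longrightarrow> gobj X M'
        \<Longrightarrow> f \<in> ghom C C' \<Longrightarrow> \<phi> \<in> ghom M M' \<Longrightarrow>
        mcomp (Fo (act \<phi>X C' M')) (s C' M') (Fm (act \<phi>X C M) (act \<phi>X C' M') (kron f \<phi>))
        = mcomp (act \<phi>Y C (Fo M)) (kron f (Fm M M' \<phi>)) (s C M)" using MF' by (elim conjE) blast
  have spent: "\<And>C D M. gobj (carrier G) C \<Longrightarrow> gobj (carrier G) D \<Longrightarrow> gobj X M \<Longrightarrow>
        mcomp (act \<phi>Y C (Fo (act \<phi>X D M))) (kron (mid C) (s D M))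
          (mcomp (Fo (act \<phi>X C (act \<phi>X D M))) (s C (act \<phi>X D M))
             (Fm (act \<phi>X (gtens G C D) M) (act \<phi>X C (act \<phi>X D M)) (mcon G \<phi>X \<Psi>X C D M)))
        = mcomp (act \<phi>Y (gtens G C D) (Fo M)) (mcon G \<phi>Y \<Psi>Y C D (Fo M)) (s (gtens G C D) M)"
    using MF' by (elim conjE) blast
  have finY: "\<And>V. gobj X V \<Longrightarrow> finite (fst (Fo V))" using Fobj unfolding gobj_def by blast
  have finG: "\<And>C. gobj (carrier G) C \<Longrightarrow> finite (fst C)" unfolding gobj_def by blast
  have finX: "\<And>C. gobj X C \<Longrightarrow> finite (fst C)" unfolding gobj_def by blast
  have actX: "\<And>C M. gobj (carrier G) C \<Longrightarrow> gobj X M \<Longrightarrow> gobj X (act \<phi>X C M)"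
    using gobj_act[OF GA] by blast
  have eta_iso: "\<And>V. gobj X V \<Longrightarrow> iso_mor (Fo V) (Fo V) (\<eta> V)"
    using eta unfolding iso_mor_def by blast
  have etai_iso: "\<And>V. gobj X V \<Longrightarrow> iso_mor (Fo V) (Fo V) (\<eta>i V)"
    using eta unfolding iso_mor_def by blast
  have eg: "\<And>V. gobj X V \<Longrightarrow> \<eta> V \<in> ghom (Fo V) (Fo V)" using eta by blast
  have eig: "\<And>V. gobj X V \<Longrightarrow> \<eta>i V \<in> ghom (Fo V) (Fo V)" using eta by blast
  have e1: "\<And>V. gobj X V \<Longrightarrow> mcomp (Fo V) (\<eta> V) (\<eta>i V) = mid (Fo V)" using eta by blast
  have e2: "\<And>V. gobj X V \<Longrightarrow> mcomp (Fo V) (\<eta>i V) (\<eta> V) = mid (Fo V)" using eta by blast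
  have sg: "\<And>C M. gobj (carrier G) C \<Longrightarrow> gobj X M \<Longrightarrow> s C M \<in> ghom (Fo (act \<phi>X C M)) (act \<phi>Y C (Fo M))"
    using siso iso_morD by blast
  have Hg: "\<And>V W \<phi>. gobj X V \<Longrightarrow> gobj X W \<Longrightarrow> \<phi> \<in> ghom V W \<Longrightarrow> Hm V W \<phi> \<in> ghom (Fo V) (Fo W)"
    unfolding Hm_def by (intro mcomp_ghom eg eig Fghom) auto
  have L3: "Hm V V (mid V) = mid (Fo V)" if "gobj X V" for V
    using that by (simp add: Hm_def Fmid mcomp_mid_left[OF finY eig] e1)
  have L4: "Hm U W (mcomp V \<psi> \<phi>) = mcomp (Fo V) (Hm V W \<psi>) (Hm U V \<phi>)"
    if "gobj X U" "gobj X V" "gobj X W" "\<phi> \<in> ghom U V" "\<psi> \<in> ghom V W" for U V W \<phi> \<psi>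
  proof -
    have "mcomp (Fo V) (Hm V W \<psi>) (Hm U V \<phi>)
        = mcomp (Fo V) (mcomp (Fo V) (mcomp (Fo W) (\<eta> W) (Fm V W \<psi>)) (\<eta>i V))
             (mcomp (Fo V) (\<eta> V) (mcomp (Fo U) (Fm U V \<phi>) (\<eta>i U)))"
      unfolding Hm_def by (simp only: mcomp_assoc)
    also have "\<dots> = mcomp (Fo V) (mcomp (Fo W) (\<eta> W) (Fm V W \<psi>)) (mcomp (Fo U) (Fm U V \<phi>) (\<eta>i U))"
      using that by (intro cancel_mid[where U="Fo U"] e2 finY mcomp_ghom eig Fghom) auto
    also have "\<dots> = Hm U W (mcomp V \<psi> \<phi>)"
      unfolding Hm_def using that by (simp add: Fcomp) (simp only: mcomp_assoc)
    finally show ?thesis by simp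
  qed
  have L5: "Hm V W (\<lambda>w v. \<phi> w v + \<psi> w v) = (\<lambda>w v. Hm V W \<phi> w v + Hm V W \<psi> w v)"
    if "gobj X V" "gobj X W" "\<phi> \<in> ghom V W" "\<psi> \<in> ghom V W" for V W \<phi> \<psi>
    using that by (simp add: Hm_def Fadd mcomp_add_left mcomp_add_right)
  have L6: "Hm V W (\<lambda>w v. c * \<phi> w v) = (\<lambda>w v. c * Hm V W \<phi> w v)"
    if "gobj X V" "gobj X W" "\<phi> \<in> ghom V W" for V W c \<phi>
    using that by (simp add: Hm_def Fsm mcomp_smult_left mcomp_smult_right)
  have LF: "lin_functor X Y Fo Hm"
    unfolding lin_functor_def using Fobj Hg L3 L4 L5 L6 by blast
  have S2: "iso_mor (Fo (act \<phi>X C M)) (act \<phi>Y C (Fo M)) (sH C M)"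
    if "gobj (carrier G) C" "gobj X M" for C M
    unfolding sH_def using that
    by (intro iso_mor_comp kron_iso eta_iso siso etai_iso actX finY finite_act finG) auto
  have S3: "mcomp (Fo (act \<phi>X C' M')) (sH C' M') (Hm (act \<phi>X C M) (act \<phi>X C' M') (kron f \<phi>))
        = mcomp (act \<phi>Y C (Fo M)) (kron f (Hm M M' \<phi>)) (sH C M)"
    if th: "gobj (carrier G) C" "gobj (carrier G) C'" "gobj X M" "gobj X M'" "f \<in> ghom C C'" "\<phi> \<in> ghom M M'"
    for C C' M M' f \<phi>
  proof -
    let ?A = "act \<phi>X C M" and ?A' = "act \<phi>X C' M'"
    have gA: "gobj X ?A" "gobj X ?A'" using th actX by auto
    have kg: "kron f \<phi> \<in> ghom ?A ?A'" using th kron_ghom by blast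
    have "mcomp (Fo ?A') (sH C' M') (Hm ?A ?A' (kron f \<phi>))
      = mcomp (Fo ?A') (mcomp (Fo ?A') (mcomp (act \<phi>Y C' (Fo M')) (kron (mid C') (\<eta> M')) (s C' M')) (\<eta>i ?A'))
          (mcomp (Fo ?A') (\<eta> ?A') (mcomp (Fo ?A) (Fm ?A ?A' (kron f \<phi>)) (\<eta>i ?A)))"
      unfolding sH_def Hm_def by (simp only: mcomp_assoc)
    also have "\<dots> = mcomp (Fo ?A') (mcomp (act \<phi>Y C' (Fo M')) (kron (mid C') (\<eta> M')) (s C' M'))
          (mcomp (Fo ?A) (Fm ?A ?A' (kron f \<phi>)) (\<eta>i ?A))"
      using gA kg by (intro cancel_mid[where U="Fo ?A"] e2 finY mcomp_ghom eig Fghom) auto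
    also have "\<dots> = mcomp (Fo ?A) (mcomp (act \<phi>Y C' (Fo M')) (kron (mid C') (\<eta> M'))
          (mcomp (Fo ?A') (s C' M') (Fm ?A ?A' (kron f \<phi>)))) (\<eta>i ?A)"
      by (simp only: mcomp_assoc)
    also have "\<dots> = mcomp (Fo ?A) (mcomp (act \<phi>Y C' (Fo M')) (kron (mid C') (\<eta> M'))
          (mcomp (act \<phi>Y C (Fo M)) (kron f (Fm M M' \<phi>)) (s C M))) (\<eta>i ?A)"
      using th by (simp add: snat)
    also have "\<dots> = mcomp (Fo ?A) (mcomp (act \<phi>Y C (Fo M)) (kron f (mcomp (Fo M') (\<eta> M') (Fm M M' \<phi>))) (s C M)) (\<eta>i ?A)"
      using th by (simp only: mcomp_assoc kron_mcomp mcomp_mid_left[OF finG mid_ghom] mcomp_mid_left[OF finG])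
    also have "\<dots> = mcomp (act \<phi>Y C (Fo M)) (kron f (Hm M M' \<phi>)) (sH C M)"
    proof -
      have "mcomp (act \<phi>Y C (Fo M)) (kron f (Hm M M' \<phi>)) (sH C M)
        = mcomp (Fo ?A) (mcomp (act \<phi>Y C (Fo M)) (mcomp (act \<phi>Y C (Fo M)) (kron f (Hm M M' \<phi>)) (kron (mid C) (\<eta> M))) (s C M)) (\<eta>i ?A)"
        unfolding sH_def by (simp only: mcomp_assoc)
      also have "mcomp (act \<phi>Y C (Fo M)) (kron f (Hm M M' \<phi>)) (kron (mid C) (\<eta> M))
          = kron f (mcomp (Fo M) (Hm M M' \<phi>) (\<eta> M))"
        using th by (simp add: kron_mcomp mcomp_mid_right[OF finG])
      also have "mcomp (Fo M) (Hm M M' \<phi>) (\<eta> M) = mcomp (Fo M') (\<eta> M') (Fm M M' \<phi>)"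
      proof -
        have "mcomp (Fo M) (Hm M M' \<phi>) (\<eta> M) = mcomp (Fo M') (\<eta> M') (mcomp (Fo M) (Fm M M' \<phi>) (mcomp (Fo M) (\<eta>i M) (\<eta> M)))"
          unfolding Hm_def by (simp only: mcomp_assoc)
        also have "\<dots> = mcomp (Fo M') (\<eta> M') (Fm M M' \<phi>)"
          using th by (simp add: e2 mcomp_mid_right[OF finY Fghom])
        finally show ?thesis .
      qed
      finally show ?thesis by simp
    qed
    finally show ?thesis .
  qed
  have S4: "mcomp (act \<phi>Y C (Fo (act \<phi>X D M))) (kron (mid C) (sH D M))
          (mcomp (Fo (act \<phi>X C (act \<phi>X D M))) (sH C (act \<phi>X D M))
             (Hm (act \<phi>X (gtens G C D) M) (act \<phi>X C (act \<phi>X D M)) (mcon G \<phi>X \<Psi>X C D M)))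
        = mcomp (act \<phi>Y (gtens G C D) (Fo M)) (mcon G \<phi>Y \<Psi>Y C D (Fo M)) (sH (gtens G C D) M)"
    if th: "gobj (carrier G) C" "gobj (carrier G) D" "gobj X M" for C D M
  proof -
    let ?N = "act \<phi>X D M" let ?Q = "act \<phi>X C ?N" let ?P = "act \<phi>X (gtens G C D) M"
    let ?mc = "mcon G \<phi>X \<Psi>X C D M"
    let ?Y = "mcomp (Fo ?P) (Fm ?P ?Q ?mc) (\<eta>i ?P)"
    have gN: "gobj X ?N" "gobj X ?Q" "gobj X ?P"
      using th actX gobj_gtens[OF GG] by auto
    have mcg: "?mc \<in> ghom ?P ?Q" using mcon_ghom[OF GA] th by blast
    have Yg: "?Y \<in> ghom (Fo ?P) (Fo ?Q)" using gN mcg by (intro mcomp_ghom eig Fghom) auto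
    have A: "mcomp (Fo ?Q) (sH C ?N) (Hm ?P ?Q ?mc)
        = mcomp (Fo ?Q) (mcomp (act \<phi>Y C (Fo ?N)) (kron (mid C) (\<eta> ?N)) (s C ?N)) ?Y"
    proof -
      have "mcomp (Fo ?Q) (sH C ?N) (Hm ?P ?Q ?mc) =
         mcomp (Fo ?Q) (mcomp (Fo ?Q) (mcomp (act \<phi>Y C (Fo ?N)) (kron (mid C) (\<eta> ?N)) (s C ?N)) (\<eta>i ?Q))
           (mcomp (Fo ?Q) (\<eta> ?Q) ?Y)"
        unfolding sH_def Hm_def by (simp only: mcomp_assoc)
      also have "\<dots> = mcomp (Fo ?Q) (mcomp (act \<phi>Y C (Fo ?N)) (kron (mid C) (\<eta> ?N)) (s C ?N)) ?Y"
        using gN Yg by (intro cancel_mid e2 finY) auto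
      finally show ?thesis .
    qed
    have B: "kron (mid C) (sH D M) = mcomp (act \<phi>Y C (Fo ?N))
        (mcomp (act \<phi>Y C (act \<phi>Y D (Fo M))) (kron (mid C) (kron (mid D) (\<eta> M))) (kron (mid C) (s D M)))
        (kron (mid C) (\<eta>i ?N))"
      unfolding sH_def using th by (simp add: kron_mid_mcomp[where \<psi>=\<phi>Y, OF finG]) (simp only: mcomp_assoc)
    have kk: "mcomp (act \<phi>Y C (Fo ?N)) (kron (mid C) (\<eta>i ?N)) (kron (mid C) (\<eta> ?N)) = mid (act \<phi>Y C (Fo ?N))"
      using th gN by (simp add: kron_mid_mcomp[where \<psi>=\<phi>Y, OF finG, symmetric] e2 kron_mid)
    have Zg: "mcomp (Fo ?Q) (s C ?N) ?Y \<in> ghom (Fo ?P) (act \<phi>Y C (Fo ?N))"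
      using th gN by (intro mcomp_ghom[OF Yg] sg) auto
    have "mcomp (act \<phi>Y C (Fo ?N)) (kron (mid C) (sH D M)) (mcomp (Fo ?Q) (sH C ?N) (Hm ?P ?Q ?mc))
      = mcomp (act \<phi>Y C (Fo ?N))
          (mcomp (act \<phi>Y C (Fo ?N)) (mcomp (act \<phi>Y C (act \<phi>Y D (Fo M))) (kron (mid C) (kron (mid D) (\<eta> M))) (kron (mid C) (s D M)))
             (kron (mid C) (\<eta>i ?N)))
          (mcomp (act \<phi>Y C (Fo ?N)) (kron (mid C) (\<eta> ?N)) (mcomp (Fo ?Q) (s C ?N) ?Y))"
      unfolding A B by (simp only: mcomp_assoc)
    also have "\<dots> = mcomp (act \<phi>Y C (Fo ?N))
          (mcomp (act \<phi>Y C (act \<phi>Y D (Fo M))) (kron (mid C) (kron (mid D) (\<eta> M))) (kron (mid C) (s D M)))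
          (mcomp (Fo ?Q) (s C ?N) ?Y)"
      using th gN Zg by (intro cancel_mid kk finite_act finG finY) auto
    also have "\<dots> = mcomp (Fo ?P) (mcomp (act \<phi>Y C (act \<phi>Y D (Fo M))) (kron (mid C) (kron (mid D) (\<eta> M)))
          (mcomp (act \<phi>Y C (Fo ?N)) (kron (mid C) (s D M)) (mcomp (Fo ?Q) (s C ?N) (Fm ?P ?Q ?mc)))) (\<eta>i ?P)"
      by (simp only: mcomp_assoc)
    also have "\<dots> = mcomp (Fo ?P) (mcomp (act \<phi>Y C (act \<phi>Y D (Fo M))) (kron (mid C) (kron (mid D) (\<eta> M)))
          (mcomp (act \<phi>Y (gtens G C D) (Fo M)) (mcon G \<phi>Y \<Psi>Y C D (Fo M)) (s (gtens G C D) M))) (\<eta>i ?P)"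
      using th by (simp add: spent)
    also have "\<dots> = mcomp (Fo ?P) (mcomp (act \<phi>Y (gtens G C D) (Fo M))
          (mcomp (act \<phi>Y C (act \<phi>Y D (Fo M))) (kron (mid C) (kron (mid D) (\<eta> M))) (mcon G \<phi>Y \<Psi>Y C D (Fo M)))
          (s (gtens G C D) M)) (\<eta>i ?P)"
      by (simp only: mcomp_assoc)
    also have "\<dots> = mcomp (Fo ?P) (mcomp (act \<phi>Y (gtens G C D) (Fo M))
          (mcomp (act \<phi>Y (gtens G C D) (Fo M)) (mcon G \<phi>Y \<Psi>Y C D (Fo M)) (kron (mid (gtens G C D)) (\<eta> M)))
          (s (gtens G C D) M)) (\<eta>i ?P)"
      using th by (subst mcon_nat) (auto intro: eg finG finY)
    also have "\<dots> = mcomp (act \<phi>Y (gtens G C D) (Fo M)) (mcon G \<phi>Y \<Psi>Y C D (Fo M)) (sH (gtens G C D) M)"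
      unfolding sH_def by (simp only: mcomp_assoc)
    finally show ?thesis .
  qed
  have MFH: "module_functor G X \<phi>X \<Psi>X Y \<phi>Y \<Psi>Y Fo Hm sH"
    unfolding module_functor_def using LF S2 S3 S4 by blast
  have I2: "mcomp (Fo V) (Hm V W \<phi>) (\<eta> V) = mcomp (Fo W) (\<eta> W) (Fm V W \<phi>)"
    if "gobj X V" "gobj X W" "\<phi> \<in> ghom V W" for V W \<phi>
  proof -
    have "mcomp (Fo V) (Hm V W \<phi>) (\<eta> V) = mcomp (Fo W) (\<eta> W) (mcomp (Fo V) (Fm V W \<phi>) (mcomp (Fo V) (\<eta>i V) (\<eta> V)))"
      unfolding Hm_def by (simp only: mcomp_assoc)
    also have "\<dots> = mcomp (Fo W) (\<eta> W) (Fm V W \<phi>)"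
      using that by (simp add: e2 mcomp_mid_right[OF finY Fghom])
    finally show ?thesis .
  qed
  have I3: "mcomp (Fo (act \<phi>X C M)) (sH C M) (\<eta> (act \<phi>X C M)) = mcomp (act \<phi>Y C (Fo M)) (kron (mid C) (\<eta> M)) (s C M)"
    if "gobj (carrier G) C" "gobj X M" for C M
  proof -
    have "mcomp (Fo (act \<phi>X C M)) (sH C M) (\<eta> (act \<phi>X C M)) =
      mcomp (act \<phi>Y C (Fo M)) (kron (mid C) (\<eta> M)) (mcomp (Fo (act \<phi>X C M)) (s C M) (mcomp (Fo (act \<phi>X C M)) (\<eta>i (act \<phi>X C M)) (\<eta> (act \<phi>X C M))))"
      unfolding sH_def by (simp only: mcomp_assoc)
    also have "\<dots> = mcomp (act \<phi>Y C (Fo M)) (kron (mid C) (\<eta> M)) (s C M)"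
      using that by (simp add: e2 actX mcomp_mid_right[OF finY sg])
    finally show ?thesis .
  qed
  have "module_functor_iso G X \<phi>X \<phi>Y Fo Fm s Fo Hm sH \<eta>"
    unfolding module_functor_iso_def using eta_iso I2 I3 by blast
  with MFH show ?thesis by blast
qed



definition ent :: "'a gobj \<Rightarrow> 'a gobj \<Rightarrow> 'k mat \<Rightarrow> 'k" where
  "ent V W \<phi> = \<phi> (the_elem (fst W)) (the_elem (fst V))"

definition unitm :: "'a gobj \<Rightarrow> 'b gobj \<Rightarrow> ('k::comm_ring_1) mat" where
  "unitm V W = (\<lambda>w v. if w = the_elem (fst W) \<and> v = the_elem (fst V) then 1 else 0)"

lemma simple_fst: "simple_obj V \<Longrightarrow> fst V = {the_elem (fst V)}"
  unfolding simple_obj_def by (elim card_1_singletonE) simp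

lemma simple_iff: "simple_obj V \<longleftrightarrow> (\<exists>b. fst V = {b})"
  unfolding simple_obj_def by (simp add: card_1_singleton_iff)

lemma simple_the_in: "simple_obj V \<Longrightarrow> the_elem (fst V) \<in> fst V"
  using simple_fst[of V] by (metis singletonI)

lemma simple_sgrade_in: "gobj S V \<Longrightarrow> simple_obj V \<Longrightarrow> sgrade V \<in> S"
  unfolding gobj_def sgrade_def using simple_the_in by blast

lemma ent_mcomp:
  assumes "simple_obj B"
  shows "ent A C (mcomp B \<psi> \<phi>) = ent B C \<psi> * ent A B (\<phi>::'k::comm_ring_1 mat)"
  unfolding ent_def mcomp_def by (subst simple_fst[OF assms]) simp

lemma ghom_simple_eq:
  assumes "\<phi> \<in> ghom V W" "simple_obj V" "simple_obj W"
  shows "\<phi> = (\<lambda>w v. ent V W \<phi> * unitm V W w v)"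
proof (intro ext)
  fix w v
  show "\<phi> w v = ent V W \<phi> * unitm V W w v"
  proof (cases "\<phi> w v = 0")
    case False
    then have "w \<in> fst W" "v \<in> fst V" using ghomD[OF assms(1)] by auto
    then show ?thesis using simple_fst[OF assms(2)] simple_fst[OF assms(3)]
      by (auto simp: ent_def unitm_def)
  next
    case True
    then show ?thesis by (auto simp: ent_def unitm_def)
  qed
qed

lemma ent_unitm: "ent V W (unitm V W) = 1"
  unfolding ent_def unitm_def by simp

lemma ent_smult: "ent V W (\<lambda>w v. c * \<phi> w v) = c * ent V W \<phi>"
  unfolding ent_def by simp

lemma ent_mid: "simple_obj V \<Longrightarrow> ent V V (mid V) = 1"
  unfolding ent_def mid_def using simple_fst by fastforce

lemma unitm_ghom:
  assumes "simple_obj V" "simple_obj W" "sgrade V = sgrade W"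
  shows "unitm V W \<in> ghom V W"
  using assms simple_fst[OF assms(1)] simple_fst[OF assms(2)]
  unfolding ghom_def unitm_def sgrade_def by auto

lemma ghom_ent_sgrade:
  assumes "\<phi> \<in> ghom V W" "ent V W \<phi> \<noteq> 0"
  shows "sgrade W = sgrade V"
  using ghomD[OF assms(1)] assms(2) unfolding ent_def sgrade_def by blast

lemma iso_simple_ent:
  assumes "iso_mor V W \<phi>" "simple_obj V" "simple_obj W"
  shows "ent V W (\<phi>::'k::{comm_ring_1,zero_neq_one} mat) \<noteq> 0"
proof
  assume z: "ent V W \<phi> = 0"
  obtain \<psi> where "mcomp W \<psi> \<phi> = mid V" using assms(1) unfolding iso_mor_def by blast
  then have "ent V V (mcomp W \<psi> \<phi>) = 1" using ent_mid[OF assms(2)] by simp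
  then show False using z by (simp add: ent_mcomp[OF assms(3)])
qed

lemma simple_act:
  assumes "simple_obj C" "simple_obj M"
  shows "simple_obj (act p C M)" "the_elem (fst (act p C M)) = Nd (the_elem (fst C)) (the_elem (fst M))"
    "sgrade (act p C M) = p (sgrade C) (sgrade M)"
proof -
  have "fst (act p C M) = {Nd (the_elem (fst C)) (the_elem (fst M))}"
    using simple_fst[OF assms(1)] simple_fst[OF assms(2)] unfolding act_def by auto
  then show "simple_obj (act p C M)" "the_elem (fst (act p C M)) = Nd (the_elem (fst C)) (the_elem (fst M))"
    "sgrade (act p C M) = p (sgrade C) (sgrade M)"
    by (auto simp: simple_iff sgrade_def snd_act_Nd)
qed

lemma simple_gtens:
  assumes "simple_obj C" "simple_obj M"
  shows "simple_obj (gtens G C M)" "the_elem (fst (gtens G C M)) = Nd (the_elem (fst C)) (the_elem (fst M))"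
    "sgrade (gtens G C M) = sgrade C \<otimes>\<^bsub>G\<^esub> sgrade M"
proof -
  have "fst (gtens G C M) = {Nd (the_elem (fst C)) (the_elem (fst M))}"
    using simple_fst[OF assms(1)] simple_fst[OF assms(2)] unfolding gtens_def by auto
  then show "simple_obj (gtens G C M)" "the_elem (fst (gtens G C M)) = Nd (the_elem (fst C)) (the_elem (fst M))"
    "sgrade (gtens G C M) = sgrade C \<otimes>\<^bsub>G\<^esub> sgrade M"
    by (auto simp: simple_iff sgrade_def snd_gtens_Nd)
qed

lemma ent_kron:
  assumes "simple_obj C" "simple_obj M" "simple_obj C'" "simple_obj M'"
  shows "ent (act p C M) (act q C' M') (kron f \<phi>) = ent C C' f * ent M M' (\<phi>::'k::comm_ring_1 mat)"
  by (simp add: ent_def simple_act assms kron_def)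



lemma kron_unitm:
  assumes "simple_obj C" "simple_obj M" "simple_obj C'" "simple_obj M'"
  shows "kron (unitm C C') (unitm M M') = (unitm (act p C M) (act q C' M') :: 'k::comm_ring_1 mat)"
  by (intro ext) (auto simp: unitm_def kron_def simple_act assms split: bt.splits)

lemma mcon_simple:
  assumes "simple_obj C" "simple_obj D" "simple_obj M"
  shows "mcon G p \<Psi> C D M = (\<lambda>w v. \<Psi> (sgrade C) (sgrade D) (p (sgrade C \<otimes>\<^bsub>G\<^esub> sgrade D) (sgrade M))
            * unitm (act p (gtens G C D) M) (act p C (act p D M)) w v)"
proof (intro ext)
  fix w v
  have fc: "fst C = {the_elem (fst C)}" and fd: "fst D = {the_elem (fst D)}" and fm: "fst M = {the_elem (fst M)}"
    using simple_fst assms by blast+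
  show "mcon G p \<Psi> C D M w v = \<Psi> (sgrade C) (sgrade D) (p (sgrade C \<otimes>\<^bsub>G\<^esub> sgrade D) (sgrade M))
            * unitm (act p (gtens G C D) M) (act p C (act p D M)) w v"
  proof (cases "\<exists>a b m. w = Nd a (Nd b m)")
    case True
    then obtain a b m where w: "w = Nd a (Nd b m)" by blast
    show ?thesis unfolding w mcon_Nd unitm_def
      by (subst fc, subst fd, subst fm) (auto simp: simple_act simple_gtens assms sgrade_def)
  next
    case False
    then show ?thesis by (auto simp: mcon_other unitm_def simple_act simple_gtens assms)
  qed
qed


definition diagm :: "'a gobj \<Rightarrow> (bt \<Rightarrow> 'k) \<Rightarrow> ('k::zero) mat" where
  "diagm V e = (\<lambda>w v. if w = v \<and> v \<in> fst V then e v else 0)"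

lemma diagm_ghom: "diagm V e \<in> ghom V V"
  unfolding diagm_def ghom_def by auto

lemma diagm_mcomp: "finite (fst V) \<Longrightarrow> mcomp V (diagm V a) (diagm V b) = diagm V (\<lambda>v. a v * (b v::'k::comm_ring_1))"
  unfolding diagm_def mcomp_def
  by (intro ext) (auto simp: if_distrib[where f="\<lambda>x. x * _"] sum.delta cong: if_cong)

lemma diagm_mid: "(\<And>v. v \<in> fst V \<Longrightarrow> e v = 1) \<Longrightarrow> diagm V e = mid V"
  unfolding diagm_def mid_def by (intro ext) auto

lemma unitm_comp:
  assumes "simple_obj V"
  shows "mcomp V (unitm V W) (unitm U V) = (unitm U W :: 'k::comm_ring_1 mat)"
  unfolding mcomp_def unitm_def by (subst simple_fst[OF assms]) (auto intro!: ext)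

lemma unitm_mid:
  assumes "simple_obj V"
  shows "unitm V V = (mid V :: 'k::comm_ring_1 mat)"
  unfolding mid_def unitm_def by (subst simple_fst[OF assms]) (auto intro!: ext)

lemma unitm_iso:
  assumes "simple_obj V" "simple_obj W" "sgrade V = sgrade W"
  shows "iso_mor V W (unitm V W :: 'k::comm_ring_1 mat)"
  unfolding iso_mor_def
  using assms by (intro conjI bexI[of _ "unitm W V"] unitm_ghom) (auto simp: unitm_comp unitm_mid)

lemma Fm_iso:
  assumes LF: "lin_functor X Y Fo Fm" and "gobj X V" "gobj X W" "iso_mor V W \<phi>"
  shows "iso_mor (Fo V) (Fo W) (Fm V W \<phi>)"
proof -
  note L = LF[unfolded lin_functor_def]
  obtain \<psi> where p: "\<phi> \<in> ghom V W" "\<psi> \<in> ghom W V" "mcomp W \<psi> \<phi> = mid V" "mcomp V \<phi> \<psi> = mid W"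
    using assms(4) unfolding iso_mor_def by blast
  have "mcomp (Fo W) (Fm W V \<psi>) (Fm V W \<phi>) = Fm V V (mcomp W \<psi> \<phi>)"
    using L assms p by (elim conjE) (metis (no_types, lifting))
  also have "\<dots> = mid (Fo V)" using L assms p by (elim conjE) (metis (no_types, lifting))
  finally have 1: "mcomp (Fo W) (Fm W V \<psi>) (Fm V W \<phi>) = mid (Fo V)" .
  have "mcomp (Fo V) (Fm V W \<phi>) (Fm W V \<psi>) = Fm W W (mcomp V \<phi> \<psi>)"
    using L assms p by (elim conjE) (metis (no_types, lifting))
  also have "\<dots> = mid (Fo W)" using L assms p by (elim conjE) (metis (no_types, lifting))
  finally have 2: "mcomp (Fo V) (Fm V W \<phi>) (Fm W V \<psi>) = mid (Fo W)" .
  have "Fm V W \<phi> \<in> ghom (Fo V) (Fo W)" "Fm W V \<psi> \<in> ghom (Fo W) (Fo V)"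
    using L assms p by (elim conjE; blast)+
  with 1 2 show ?thesis unfolding iso_mor_def by blast
qed


definition Rob :: "'a \<Rightarrow> 'a gobj" where "Rob x = ({Lf 0}, \<lambda>_. x)"

lemma Rob_simple: "simple_obj (Rob x)" and Rob_sgrade: "sgrade (Rob x) = x"
  and Rob_gobj: "x \<in> S \<Longrightarrow> gobj S (Rob x)"
  unfolding Rob_def simple_obj_def sgrade_def gobj_def by auto

lemma normalize:
  fixes Fm :: "'x gobj \<Rightarrow> 'x gobj \<Rightarrow> 'k::field mat \<Rightarrow> 'k mat"
  assumes LF: "lin_functor X Y Fo Fm"
    and sp: "\<forall>V. gobj X V \<and> simple_obj V \<longrightarrow> simple_obj (Fo V)"
  shows "\<exists>\<eta> \<eta>i. (\<forall>V. gobj X V \<longrightarrow> \<eta> V \<in> ghom (Fo V) (Fo V) \<and> \<eta>i V \<in> ghom (Fo V) (Fo V)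
        \<and> mcomp (Fo V) (\<eta> V) (\<eta>i V) = mid (Fo V) \<and> mcomp (Fo V) (\<eta>i V) (\<eta> V) = mid (Fo V)) \<and>
      (\<forall>V W. gobj X V \<and> gobj X W \<and> simple_obj V \<and> simple_obj W \<and> sgrade V = sgrade W \<longrightarrow>
        ent (Fo V) (Fo W) (mcomp (Fo W) (\<eta> W) (mcomp (Fo V) (Fm V W (unitm V W)) (\<eta>i V))) = 1)"
proof -
  note L = LF[unfolded lin_functor_def]
  have Fobj: "\<And>V. gobj X V \<Longrightarrow> gobj Y (Fo V)" using L by (elim conjE) blast
  have Fghom: "\<And>V W \<phi>. gobj X V \<Longrightarrow> gobj X W \<Longrightarrow> \<phi> \<in> ghom V W \<Longrightarrow> Fm V W \<phi> \<in> ghom (Fo V) (Fo W)"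
    using L by (elim conjE) blast
  have Fmid: "\<And>V. gobj X V \<Longrightarrow> Fm V V (mid V) = mid (Fo V)" using L by (elim conjE) blast
  have Fcomp: "\<And>U V W \<phi> \<psi>. gobj X U \<Longrightarrow> gobj X V \<Longrightarrow> gobj X W \<Longrightarrow> \<phi> \<in> ghom U V \<Longrightarrow> \<psi> \<in> ghom V W \<Longrightarrow>
        Fm U W (mcomp V \<psi> \<phi>) = mcomp (Fo V) (Fm V W \<psi>) (Fm U V \<phi>)" using L by (elim conjE) blast
  have Fsm: "\<And>V W c \<phi>. gobj X V \<Longrightarrow> gobj X W \<Longrightarrow> \<phi> \<in> ghom V W \<Longrightarrow>
        Fm V W (\<lambda>w v. c * \<phi> w v) = (\<lambda>w v. c * Fm V W \<phi> w v)" using L by (elim conjE) blast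
  have finX: "\<And>V. gobj X V \<Longrightarrow> finite (fst V)" unfolding gobj_def by blast
  define cc where "cc V = ent (Fo V) (Fo (Rob (sgrade V))) (Fm V (Rob (sgrade V)) (unitm V (Rob (sgrade V))))" for V
  define d where "d V v = cc (({v}, snd V) :: 'x gobj)" for V :: "'x gobj" and v
  define \<eta> where "\<eta> V = Fm V V (diagm V (d V))" for V
  define \<eta>i where "\<eta>i V = Fm V V (diagm V (\<lambda>v. inverse (d V v)))" for V
  have sgX: "sgrade V \<in> X" if "gobj X V" "simple_obj V" for V
    using that simple_fst[OF that(2)] unfolding gobj_def sgrade_def by auto
  have cc_nz: "cc V \<noteq> 0" if "gobj X V" "simple_obj V" for V
  proof -
    have "iso_mor (Fo V) (Fo (Rob (sgrade V))) (Fm V (Rob (sgrade V)) (unitm V (Rob (sgrade V))))"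
      using that by (intro Fm_iso[OF LF] unitm_iso Rob_gobj sgX Rob_simple) (auto simp: Rob_sgrade)
    then show ?thesis unfolding cc_def
      using that by (intro iso_simple_ent) (auto simp: sp[rule_format] Rob_gobj sgX Rob_simple)
  qed
  have sub: "gobj X ({v}, snd V)" "simple_obj ({v}, snd V)" if "gobj X V" "v \<in> fst V" for V v
    using that unfolding gobj_def simple_obj_def by auto
  have d_nz: "d V v \<noteq> 0" if "gobj X V" "v \<in> fst V" for V v
    unfolding d_def using sub[OF that] cc_nz by blast
  have E: "gobj X V \<longrightarrow> \<eta> V \<in> ghom (Fo V) (Fo V) \<and> \<eta>i V \<in> ghom (Fo V) (Fo V)
        \<and> mcomp (Fo V) (\<eta> V) (\<eta>i V) = mid (Fo V) \<and> mcomp (Fo V) (\<eta>i V) (\<eta> V) = mid (Fo V)" for V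
  proof
    assume V: "gobj X V"
    have "mcomp (Fo V) (\<eta> V) (\<eta>i V) = Fm V V (mcomp V (diagm V (d V)) (diagm V (\<lambda>v. inverse (d V v))))"
      unfolding \<eta>_def \<eta>i_def using V by (simp add: Fcomp diagm_ghom)
    also have "\<dots> = mid (Fo V)"
      using V d_nz by (simp add: diagm_mcomp finX diagm_mid Fmid)
    finally have 1: "mcomp (Fo V) (\<eta> V) (\<eta>i V) = mid (Fo V)" .
    have "mcomp (Fo V) (\<eta>i V) (\<eta> V) = Fm V V (mcomp V (diagm V (\<lambda>v. inverse (d V v))) (diagm V (d V)))"
      unfolding \<eta>_def \<eta>i_def using V by (simp add: Fcomp diagm_ghom)
    also have "\<dots> = mid (Fo V)"
      using V d_nz by (simp add: diagm_mcomp finX diagm_mid Fmid)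
    finally have 2: "mcomp (Fo V) (\<eta>i V) (\<eta> V) = mid (Fo V)" .
    show "\<eta> V \<in> ghom (Fo V) (Fo V) \<and> \<eta>i V \<in> ghom (Fo V) (Fo V)
        \<and> mcomp (Fo V) (\<eta> V) (\<eta>i V) = mid (Fo V) \<and> mcomp (Fo V) (\<eta>i V) (\<eta> V) = mid (Fo V)"
      using 1 2 V unfolding \<eta>_def \<eta>i_def by (auto intro: Fghom diagm_ghom)
  qed
  have dsimp: "diagm V (d V) = (\<lambda>w v. cc V * mid V w v)"
     "diagm V (\<lambda>v. inverse (d V v)) = (\<lambda>w v. inverse (cc V) * mid V w v)"
    if "simple_obj V" for V
  proof -
    have eqV: "({v}, snd V) = V" if "v \<in> fst V" for v
    proof -
      have "fst V = {v}" using simple_fst[OF \<open>simple_obj V\<close>] that by (metis singletonD)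
      then show ?thesis by (cases V) simp
    qed
    then show "diagm V (d V) = (\<lambda>w v. cc V * mid V w v)"
     "diagm V (\<lambda>v. inverse (d V v)) = (\<lambda>w v. inverse (cc V) * mid V w v)"
      unfolding diagm_def mid_def d_def by (auto intro!: ext simp: eqV)
  qed
  have ent_eta: "ent (Fo V) (Fo V) (\<eta> V) = cc V" "ent (Fo V) (Fo V) (\<eta>i V) = inverse (cc V)"
    if "gobj X V" "simple_obj V" for V
    unfolding \<eta>_def \<eta>i_def using that
    by (simp_all add: dsimp Fsm mid_ghom Fmid ent_smult ent_mid sp[rule_format])
  have U: "ent (Fo V) (Fo W) (mcomp (Fo W) (\<eta> W) (mcomp (Fo V) (Fm V W (unitm V W)) (\<eta>i V))) = 1"
    if th: "gobj X V" "gobj X W" "simple_obj V" "simple_obj W" "sgrade V = sgrade W" for V W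
  proof -
    let ?R = "Rob (sgrade V)"
    have gR: "gobj X ?R" "simple_obj ?R" "simple_obj (Fo ?R)"
      using th by (auto intro: Rob_gobj sgX Rob_simple sp[rule_format])
    have sF: "simple_obj (Fo V)" "simple_obj (Fo W)" using th sp[rule_format] by blast+
    have "Fm V ?R (unitm V ?R) = Fm V ?R (mcomp W (unitm W ?R) (unitm V W))"
      using th by (simp add: unitm_comp)
    also have "\<dots> = mcomp (Fo W) (Fm W ?R (unitm W ?R)) (Fm V W (unitm V W))"
      using th gR by (intro Fcomp unitm_ghom) (auto simp: Rob_sgrade)
    finally have "cc V = cc W * ent (Fo V) (Fo W) (Fm V W (unitm V W))"
      unfolding cc_def using th by (simp add: ent_mcomp sF)
    then show ?thesis
      using th sF cc_nz[of V] by (simp add: ent_mcomp ent_eta field_simps)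
  qed
  show ?thesis using E U by blast
qed


lemma act_inv_left:
  assumes "group_action G X p" "g \<in> carrier G" "x \<in> X"
  shows "p (inv\<^bsub>G\<^esub> g) (p g x) = x"
proof -
  have GG: "group G" using assms(1) unfolding group_action_def group_hom_def by blast
  have "p (inv\<^bsub>G\<^esub> g) (p g x) = p (inv\<^bsub>G\<^esub> g \<otimes>\<^bsub>G\<^esub> g) x"
    using group_action.composition_rule[OF assms(1) assms(3)] assms(2) group.inv_closed[OF GG] by metis
  also have "\<dots> = p \<one>\<^bsub>G\<^esub> x" using group.l_inv[OF GG assms(2)] by simp
  also have "\<dots> = x" using group_action.id_eq_one[OF assms(1)] assms(3) by (metis restrict_apply')
  finally show ?thesis .
qed

lemma act_inv_right:
  assumes "group_action G X p" "g \<in> carrier G" "x \<in> X"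
  shows "p g (p (inv\<^bsub>G\<^esub> g) x) = x"
proof -
  have GG: "group G" using assms(1) unfolding group_action_def group_hom_def by blast
  have "p g (p (inv\<^bsub>G\<^esub> g) x) = p (g \<otimes>\<^bsub>G\<^esub> inv\<^bsub>G\<^esub> g) x"
    using group_action.composition_rule[OF assms(1) assms(3)] assms(2) group.inv_closed[OF GG] by metis
  also have "\<dots> = p \<one>\<^bsub>G\<^esub> x" using group.r_inv[OF GG assms(2)] by simp
  also have "\<dots> = x" using group_action.id_eq_one[OF assms(1)] assms(3) by (metis restrict_apply')
  finally show ?thesis .
qed

lemma act_closed:
  assumes "group_action G X p" "g \<in> carrier G" "x \<in> X"
  shows "p g x \<in> X"
  using group_action.element_image[OF assms refl] .

theorem lemma4p20:
  fixes G :: "'g monoid"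
    and X :: "'x set" and Y :: "'y set"
    and \<phi>X :: "'g \<Rightarrow> 'x \<Rightarrow> 'x" and \<phi>Y :: "'g \<Rightarrow> 'y \<Rightarrow> 'y"
    and \<omega> :: "'g \<Rightarrow> 'g \<Rightarrow> 'g \<Rightarrow> 'k::field"
    and \<Psi>X :: "'g \<Rightarrow> 'g \<Rightarrow> 'x \<Rightarrow> 'k" and \<Psi>Y :: "'g \<Rightarrow> 'g \<Rightarrow> 'y \<Rightarrow> 'k"
    and Fo :: "'x gobj \<Rightarrow> 'y gobj" and Fm :: "'x gobj \<Rightarrow> 'x gobj \<Rightarrow> 'k mat \<Rightarrow> 'k mat"
    and s :: "'g gobj \<Rightarrow> 'x gobj \<Rightarrow> 'k mat"
  assumes "alg_closed TYPE('k)"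
    and "group G"
    and "normalized_3cocycle G \<omega>"
    and "group_action G X \<phi>X" and "group_action G Y \<phi>Y"
    and "module_cochain G X \<phi>X \<omega> \<Psi>X" and "module_cochain G Y \<phi>Y \<omega> \<Psi>Y"
    and "module_functor G X \<phi>X \<Psi>X Y \<phi>Y \<Psi>Y Fo Fm s"
    and "\<forall>V. gobj X V \<and> simple_obj V \<longrightarrow> simple_obj (Fo V)"
  shows "\<exists>f \<Lambda> Ho Hm sH \<eta>.
           f \<in> X \<rightarrow> Y \<and>
           (\<forall>g\<in>carrier G. \<forall>x\<in>X. f (\<phi>X g x) = \<phi>Y g (f x)) \<and>
           (\<forall>g\<in>carrier G. \<forall>x\<in>X. \<Lambda> g x \<noteq> 0) \<and>
           (\<forall>g\<in>carrier G. \<forall>h\<in>carrier G. \<forall>x\<in>X.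
              \<Lambda> h (\<phi>X (inv\<^bsub>G\<^esub> g) x) * inverse (\<Lambda> (g \<otimes>\<^bsub>G\<^esub> h) x) * \<Lambda> g x
              = inverse (\<Psi>X g h x) * \<Psi>Y g h (f x)) \<and>
           module_functor G X \<phi>X \<Psi>X Y \<phi>Y \<Psi>Y Ho Hm sH \<and>
           is_F_f_Lambda G X \<phi>X \<phi>Y f \<Lambda> Ho sH \<and>
           module_functor_iso G X \<phi>X \<phi>Y Fo Fm s Ho Hm sH \<eta>"
proof -
  note MF = assms(8) and GA = assms(4) and GAY = assms(5) and GG = assms(2) and sp = assms(9)
  have LF: "lin_functor X Y Fo Fm" using MF unfolding module_functor_def by blast
  obtain \<eta> \<eta>i where E: "\<And>V. gobj X V \<Longrightarrow> \<eta> V \<in> ghom (Fo V) (Fo V) \<and> \<eta>i V \<in> ghom (Fo V) (Fo V)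
        \<and> mcomp (Fo V) (\<eta> V) (\<eta>i V) = mid (Fo V) \<and> mcomp (Fo V) (\<eta>i V) (\<eta> V) = mid (Fo V)"
    and U0: "\<And>V W. gobj X V \<Longrightarrow> gobj X W \<Longrightarrow> simple_obj V \<Longrightarrow> simple_obj W \<Longrightarrow> sgrade V = sgrade W \<Longrightarrow>
        ent (Fo V) (Fo W) (mcomp (Fo W) (\<eta> W) (mcomp (Fo V) (Fm V W (unitm V W)) (\<eta>i V))) = 1"
    using normalize[OF LF sp] by blast
  define Hm where "Hm = (\<lambda>V W \<phi>. mcomp (Fo W) (\<eta> W) (mcomp (Fo V) (Fm V W \<phi>) (\<eta>i V)))"
  define sH where "sH = (\<lambda>C M. mcomp (act \<phi>Y C (Fo M)) (kron (mid C) (\<eta> M))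
                   (mcomp (Fo (act \<phi>X C M)) (s C M) (\<eta>i (act \<phi>X C M))))"
  have T: "module_functor G X \<phi>X \<Psi>X Y \<phi>Y \<Psi>Y Fo Hm sH \<and> module_functor_iso G X \<phi>X \<phi>Y Fo Fm s Fo Hm sH \<eta>"
    by (rule transport[OF MF GA GG E Hm_def sH_def]) blast
  then have MFH: "module_functor G X \<phi>X \<Psi>X Y \<phi>Y \<Psi>Y Fo Hm sH" by blast
  note MH = MFH[unfolded module_functor_def lin_functor_def]
  have Fobj: "\<And>V. gobj X V \<Longrightarrow> gobj Y (Fo V)" using MH by (elim conjE) blast
  have Hghom: "\<And>V W \<phi>. gobj X V \<Longrightarrow> gobj X W \<Longrightarrow> \<phi> \<in> ghom V W \<Longrightarrow> Hm V W \<phi> \<in> ghom (Fo V) (Fo W)"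
    using MH by (elim conjE) blast
  have Hsm: "\<And>V W c \<phi>. gobj X V \<Longrightarrow> gobj X W \<Longrightarrow> \<phi> \<in> ghom V W \<Longrightarrow>
        Hm V W (\<lambda>w v. c * \<phi> w v) = (\<lambda>w v. c * Hm V W \<phi> w v)" using MH by (elim conjE) blast
  have siso: "\<And>C M. gobj (carrier G) C \<Longrightarrow> gobj X M \<Longrightarrow> iso_mor (Fo (act \<phi>X C M)) (act \<phi>Y C (Fo M)) (sH C M)"
    using MH by (elim conjE) blast
  have snat: "\<And>C C' M M' f \<phi>. gobj (carrier G) C \<Longrightarrow> gobj (carrier G) C' \<Longrightarrow> gobj X M \<Longrightarrow> gobj X M'
        \<Longrightarrow> f \<in> ghom C C' \<Longrightarrow> \<phi> \<in> ghom M M' \<Longrightarrow>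
        mcomp (Fo (act \<phi>X C' M')) (sH C' M') (Hm (act \<phi>X C M) (act \<phi>X C' M') (kron f \<phi>))
        = mcomp (act \<phi>Y C (Fo M)) (kron f (Hm M M' \<phi>)) (sH C M)" using MH by (elim conjE) blast
  have spent: "\<And>C D M. gobj (carrier G) C \<Longrightarrow> gobj (carrier G) D \<Longrightarrow> gobj X M \<Longrightarrow>
        mcomp (act \<phi>Y C (Fo (act \<phi>X D M))) (kron (mid C) (sH D M))
          (mcomp (Fo (act \<phi>X C (act \<phi>X D M))) (sH C (act \<phi>X D M))
             (Hm (act \<phi>X (gtens G C D) M) (act \<phi>X C (act \<phi>X D M)) (mcon G \<phi>X \<Psi>X C D M)))
        = mcomp (act \<phi>Y (gtens G C D) (Fo M)) (mcon G \<phi>Y \<Psi>Y C D (Fo M)) (sH (gtens G C D) M)"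
    using MH by (elim conjE) blast
  have HU: "ent (Fo V) (Fo W) (Hm V W (unitm V W)) = 1"
    if "gobj X V" "gobj X W" "simple_obj V" "simple_obj W" "sgrade V = sgrade W" for V W
    unfolding Hm_def using U0 that by blast
  have spF: "simple_obj (Fo V)" if "gobj X V" "simple_obj V" for V using sp that by blast
  have G1: "sgrade (Fo W) = sgrade (Fo V)"
    if th: "gobj X V" "gobj X W" "simple_obj V" "simple_obj W" "sgrade V = sgrade W" for V W
    using th by (intro ghom_ent_sgrade[of "Hm V W (unitm V W)" "Fo V" "Fo W"] Hghom unitm_ghom) (auto simp: HU)
  define f where "f x = sgrade (Fo (Rob x))" for x
  have G2: "sgrade (Fo V) = f (sgrade V)" if "gobj X V" "simple_obj V" for V
  proof -
    have sX: "sgrade V \<in> X" using that simple_sgrade_in by blast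
    show ?thesis unfolding f_def
      using that sX by (intro G1) (auto simp: Rob_gobj Rob_simple Rob_sgrade)
  qed
  define sHe where "sHe C M = ent (Fo (act \<phi>X C M)) (act \<phi>Y C (Fo M)) (sH C M)" for C M
  define \<Lambda> where "\<Lambda> g y = sHe (Rob g) (Rob (\<phi>X (inv\<^bsub>G\<^esub> g) y))" for g y
  have actS: "gobj X (act \<phi>X C M)" "simple_obj (act \<phi>X C M)" "sgrade (act \<phi>X C M) = \<phi>X (sgrade C) (sgrade M)"
    if "gobj (carrier G) C" "gobj X M" "simple_obj C" "simple_obj M" for C M
    using that gobj_act[OF GA] simple_act by blast+
  have K: "sHe C M = sHe C' M'"
    if th: "gobj (carrier G) C" "gobj (carrier G) C'" "gobj X M" "gobj X M'" "simple_obj C" "simple_obj C'"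
      "simple_obj M" "simple_obj M'" "sgrade C = sgrade C'" "sgrade M = sgrade M'" for C C' M M'
  proof -
    have ug: "unitm C C' \<in> ghom C C'" "unitm M M' \<in> ghom M M'" using th by (auto intro: unitm_ghom)
    have e: "mcomp (Fo (act \<phi>X C' M')) (sH C' M') (Hm (act \<phi>X C M) (act \<phi>X C' M') (kron (unitm C C') (unitm M M')))
        = mcomp (act \<phi>Y C (Fo M)) (kron (unitm C C') (Hm M M' (unitm M M'))) (sH C M)"
      using snat th ug by blast
    have s1: "simple_obj (Fo (act \<phi>X C' M'))" "simple_obj (act \<phi>Y C (Fo M))"
      using th actS spF simple_act by blast+
    have "ent (Fo (act \<phi>X C M)) (act \<phi>Y C' (Fo M')) (mcomp (Fo (act \<phi>X C' M')) (sH C' M') (Hm (act \<phi>X C M) (act \<phi>X C' M') (kron (unitm C C') (unitm M M'))))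
        = sHe C' M'"
    proof -
      have ku: "kron (unitm C C') (unitm M M') = (unitm (act \<phi>X C M) (act \<phi>X C' M') :: 'k mat)"
        using th by (intro kron_unitm) auto
      have "ent (Fo (act \<phi>X C M)) (Fo (act \<phi>X C' M')) (Hm (act \<phi>X C M) (act \<phi>X C' M') (unitm (act \<phi>X C M) (act \<phi>X C' M'))) = 1"
        using th actS by (intro HU) auto
      then show ?thesis using s1 by (simp add: ent_mcomp sHe_def ku)
    qed
    moreover have "ent (Fo (act \<phi>X C M)) (act \<phi>Y C' (Fo M')) (mcomp (act \<phi>Y C (Fo M)) (kron (unitm C C') (Hm M M' (unitm M M'))) (sH C M))
        = sHe C M"
      using th s1 spF by (simp add: ent_mcomp sHe_def ent_kron ent_unitm HU)
    ultimately show ?thesis using e by simp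
  qed
  have P2: "sHe C M = \<Lambda> (sgrade C) (\<phi>X (sgrade C) (sgrade M))"
    if th: "gobj (carrier G) C" "gobj X M" "simple_obj C" "simple_obj M" for C M
  proof -
    have sX: "sgrade M \<in> X" using th simple_sgrade_in by blast
    have sG: "sgrade C \<in> carrier G" using th simple_sgrade_in by blast
    show ?thesis unfolding \<Lambda>_def act_inv_left[OF GA sG sX]
      using th sX sG by (intro K) (auto simp: Rob_gobj Rob_simple Rob_sgrade)
  qed
  have equiv: "f (\<phi>X g x) = \<phi>Y g (f x)" if gx: "g \<in> carrier G" "x \<in> X" for g x
  proof -
    let ?A = "act \<phi>X (Rob g) (Rob x)"
    let ?B = "act \<phi>Y (Rob g) (Fo (Rob x))"
    have rg: "gobj (carrier G) (Rob g)" "gobj X (Rob x)" using gx by (auto intro: Rob_gobj)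
    have rs: "simple_obj (Rob g)" "simple_obj (Rob x)" by (rule Rob_simple)+
    have A1: "gobj X ?A" using actS(1)[OF rg rs] .
    have A2: "simple_obj ?A" using actS(2)[OF rg rs] .
    have A3: "sgrade ?A = \<phi>X g x" using actS(3)[OF rg rs] by (simp add: Rob_sgrade)
    have sFx: "simple_obj (Fo (Rob x))" using spF[OF rg(2) rs(2)] .
    have B2: "simple_obj ?B" using simple_act(1)[OF rs(1) sFx] .
    have B3: "sgrade ?B = \<phi>Y g (f x)" using simple_act(3)[OF rs(1) sFx] by (simp add: Rob_sgrade f_def)
    have sFA: "simple_obj (Fo ?A)" using spF[OF A1 A2] .
    have "f (\<phi>X g x) = sgrade (Fo ?A)" using G2[OF A1 A2] A3 by simp
    also have "\<dots> = sgrade ?B"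
    proof -
      have "ent (Fo ?A) ?B (sH (Rob g) (Rob x)) \<noteq> 0"
        using iso_simple_ent[OF siso[OF rg] sFA B2] .
      then show ?thesis using ghom_ent_sgrade[OF iso_morD[OF siso[OF rg]]] by simp
    qed
    also have "\<dots> = \<phi>Y g (f x)" using B3 .
    finally show ?thesis .
  qed
  have fXY: "f \<in> X \<rightarrow> Y"
  proof
    fix x assume x: "x \<in> X"
    have r: "gobj X (Rob x)" using x by (rule Rob_gobj)
    have "gobj Y (Fo (Rob x))" "simple_obj (Fo (Rob x))" using Fobj[OF r] spF[OF r Rob_simple] by auto
    then show "f x \<in> Y" unfolding f_def by (rule simple_sgrade_in)
  qed
  have Lnz: "\<Lambda> g x \<noteq> 0" if "g \<in> carrier G" "x \<in> X" for g x
  proof -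
    have ig: "inv\<^bsub>G\<^esub> g \<in> carrier G" using group.inv_closed[OF GG] that by blast
    have y: "\<phi>X (inv\<^bsub>G\<^esub> g) x \<in> X" using act_closed[OF GA ig that(2)] .
    have rg: "gobj (carrier G) (Rob g)" "gobj X (Rob (\<phi>X (inv\<^bsub>G\<^esub> g) x))"
      using Rob_gobj[OF that(1)] Rob_gobj[OF y] by auto
    have rs: "simple_obj (Rob g)" "simple_obj (Rob (\<phi>X (inv\<^bsub>G\<^esub> g) x))" by (rule Rob_simple)+
    have s1: "simple_obj (Fo (act \<phi>X (Rob g) (Rob (\<phi>X (inv\<^bsub>G\<^esub> g) x))))"
      using spF[OF actS(1)[OF rg rs] actS(2)[OF rg rs]] .
    have s2: "simple_obj (act \<phi>Y (Rob g) (Fo (Rob (\<phi>X (inv\<^bsub>G\<^esub> g) x))))"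
      using simple_act(1)[OF rs(1) spF[OF rg(2) rs(2)]] .
    show ?thesis unfolding \<Lambda>_def sHe_def
      using iso_simple_ent[OF siso[OF rg] s1 s2] .
  qed
  have coc: "\<Lambda> h (\<phi>X (inv\<^bsub>G\<^esub> g) x) * inverse (\<Lambda> (g \<otimes>\<^bsub>G\<^esub> h) x) * \<Lambda> g x
              = inverse (\<Psi>X g h x) * \<Psi>Y g h (f x)"
    if gh: "g \<in> carrier G" "h \<in> carrier G" "x \<in> X" for g h x
  proof -
    have ghc: "g \<otimes>\<^bsub>G\<^esub> h \<in> carrier G" using GG gh by (simp add: group.is_monoid monoid.m_closed)
    have igh: "inv\<^bsub>G\<^esub> (g \<otimes>\<^bsub>G\<^esub> h) \<in> carrier G" using group.inv_closed[OF GG ghc] .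
    define x0 where "x0 = \<phi>X (inv\<^bsub>G\<^esub> (g \<otimes>\<^bsub>G\<^esub> h)) x"
    have x0: "x0 \<in> X" unfolding x0_def using act_closed[OF GA igh gh(3)] .
    have xx: "\<phi>X (g \<otimes>\<^bsub>G\<^esub> h) x0 = x" unfolding x0_def using act_inv_right[OF GA ghc gh(3)] .
    have hx0: "\<phi>X h x0 \<in> X" using act_closed[OF GA gh(2) x0] .
    have cx: "\<phi>X g (\<phi>X h x0) = x" using xx group_action.composition_rule[OF GA x0 gh(1,2)] by simp
    have ix: "\<phi>X (inv\<^bsub>G\<^esub> g) x = \<phi>X h x0" using act_inv_left[OF GA gh(1) hx0] cx by simp
    let ?C = "Rob g" and ?D = "Rob h" and ?M = "Rob x0"
    let ?N = "act \<phi>X ?D ?M" let ?Q = "act \<phi>X ?C ?N" let ?P = "act \<phi>X (gtens G ?C ?D) ?M"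
    have o1: "gobj (carrier G) ?C" using Rob_gobj[OF gh(1)] .
    have o2: "gobj (carrier G) ?D" using Rob_gobj[OF gh(2)] .
    have o3: "gobj X ?M" using Rob_gobj[OF x0] .
    have o4: "simple_obj ?C" "simple_obj ?D" "simple_obj ?M" by (rule Rob_simple)+
    have CD1: "gobj (carrier G) (gtens G ?C ?D)" using gobj_gtens[OF GG o1 o2] .
    have CD2: "simple_obj (gtens G ?C ?D)" using simple_gtens(1)[OF o4(1,2)] .
    have CD3: "sgrade (gtens G ?C ?D) = g \<otimes>\<^bsub>G\<^esub> h" using simple_gtens(3)[OF o4(1,2)] by (simp add: Rob_sgrade)
    have N1: "gobj X ?N" using actS(1)[OF o2 o3 o4(2,3)] .
    have N2: "simple_obj ?N" using actS(2)[OF o2 o3 o4(2,3)] .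
    have N3: "sgrade ?N = \<phi>X h x0" using actS(3)[OF o2 o3 o4(2,3)] by (simp add: Rob_sgrade)
    have Q1: "gobj X ?Q" using actS(1)[OF o1 N1 o4(1) N2] .
    have Q2: "simple_obj ?Q" using actS(2)[OF o1 N1 o4(1) N2] .
    have Q3: "sgrade ?Q = x" using actS(3)[OF o1 N1 o4(1) N2] N3 cx by (simp add: Rob_sgrade)
    have P1: "gobj X ?P" using actS(1)[OF CD1 o3 CD2 o4(3)] .
    have P2': "simple_obj ?P" using actS(2)[OF CD1 o3 CD2 o4(3)] .
    have P3: "sgrade ?P = x" using actS(3)[OF CD1 o3 CD2 o4(3)] CD3 xx by (simp add: Rob_sgrade)
    have e1: "sHe ?D ?M = \<Lambda> h (\<phi>X (inv\<^bsub>G\<^esub> g) x)" using P2[OF o2 o3 o4(2,3)] ix by (simp add: Rob_sgrade)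
    have e2: "sHe ?C ?N = \<Lambda> g x" using P2[OF o1 N1 o4(1) N2] N3 cx by (simp add: Rob_sgrade)
    have e3: "sHe (gtens G ?C ?D) ?M = \<Lambda> (g \<otimes>\<^bsub>G\<^esub> h) x" using P2[OF CD1 o3 CD2 o4(3)] CD3 xx by (simp add: Rob_sgrade)
    have sFM0: "simple_obj (Fo ?M)" using spF[OF o3 o4(3)] .
    have fM: "sgrade (Fo ?M) = f x0" using G2[OF o3 o4(3)] by (simp add: Rob_sgrade)
    have fx: "\<phi>Y (g \<otimes>\<^bsub>G\<^esub> h) (f x0) = f x" using equiv[OF ghc x0] xx by simp
    have mcX: "mcon G \<phi>X \<Psi>X ?C ?D ?M = (\<lambda>w v. \<Psi>X g h x * unitm ?P ?Q w v)"
      using mcon_simple[OF o4, of G \<phi>X \<Psi>X] xx by (simp add: Rob_sgrade)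
    have mcY0: "mcon G \<phi>Y \<Psi>Y ?C ?D (Fo ?M) = (\<lambda>w v. \<Psi>Y g h (f x) *
        unitm (act \<phi>Y (gtens G ?C ?D) (Fo ?M)) (act \<phi>Y ?C (act \<phi>Y ?D (Fo ?M))) w v)"
      using mcon_simple[OF o4(1,2) sFM0, of G \<phi>Y \<Psi>Y] fM fx by (simp add: Rob_sgrade)
    have mcY: "ent (act \<phi>Y (gtens G ?C ?D) (Fo ?M)) (act \<phi>Y ?C (act \<phi>Y ?D (Fo ?M))) (mcon G \<phi>Y \<Psi>Y ?C ?D (Fo ?M)) = \<Psi>Y g h (f x)"
      unfolding mcY0 ent_smult ent_unitm by simp
    have uPQ: "unitm ?P ?Q \<in> ghom ?P ?Q" using unitm_ghom[OF P2' Q2] P3 Q3 by simp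
    have HU1: "ent (Fo ?P) (Fo ?Q) (Hm ?P ?Q (unitm ?P ?Q)) = 1" using HU[OF P1 Q1 P2' Q2] P3 Q3 by simp
    have Hmc: "ent (Fo ?P) (Fo ?Q) (Hm ?P ?Q (mcon G \<phi>X \<Psi>X ?C ?D ?M)) = \<Psi>X g h x"
      unfolding mcX Hsm[OF P1 Q1 uPQ] ent_smult HU1 by simp
    have sFN0: "simple_obj (Fo ?N)" using spF[OF N1 N2] .
    have sFN: "simple_obj (act \<phi>Y ?C (Fo ?N))" using simple_act(1)[OF o4(1) sFN0] .
    have sFQ: "simple_obj (Fo ?Q)" using spF[OF Q1 Q2] .
    have sFM: "simple_obj (act \<phi>Y (gtens G ?C ?D) (Fo ?M))" using simple_act(1)[OF CD2 sFM0] .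
    have sADM: "simple_obj (act \<phi>Y ?D (Fo ?M))" using simple_act(1)[OF o4(2) sFM0] .
    have k1: "ent (act \<phi>Y ?C (Fo ?N)) (act \<phi>Y ?C (act \<phi>Y ?D (Fo ?M))) (kron (mid ?C) (sH ?D ?M)) = sHe ?D ?M"
      unfolding sHe_def ent_kron[OF o4(1) sFN0 o4(1) sADM, of \<phi>Y \<phi>Y "mid ?C" "sH ?D ?M"] ent_mid[OF o4(1)] by simp
    have "ent (Fo ?P) (act \<phi>Y ?C (act \<phi>Y ?D (Fo ?M))) (mcomp (act \<phi>Y ?C (Fo ?N)) (kron (mid ?C) (sH ?D ?M))
          (mcomp (Fo ?Q) (sH ?C ?N) (Hm ?P ?Q (mcon G \<phi>X \<Psi>X ?C ?D ?M))))
        = \<Lambda> h (\<phi>X (inv\<^bsub>G\<^esub> g) x) * (\<Lambda> g x * \<Psi>X g h x)"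
      unfolding ent_mcomp[OF sFN] ent_mcomp[OF sFQ] k1 Hmc e1[symmetric] e2[symmetric] sHe_def by simp
    moreover have "ent (Fo ?P) (act \<phi>Y ?C (act \<phi>Y ?D (Fo ?M)))
        (mcomp (act \<phi>Y (gtens G ?C ?D) (Fo ?M)) (mcon G \<phi>Y \<Psi>Y ?C ?D (Fo ?M)) (sH (gtens G ?C ?D) ?M))
        = \<Psi>Y g h (f x) * \<Lambda> (g \<otimes>\<^bsub>G\<^esub> h) x"
      unfolding ent_mcomp[OF sFM] mcY e3[symmetric] sHe_def by simp
    ultimately have eq: "\<Lambda> h (\<phi>X (inv\<^bsub>G\<^esub> g) x) * (\<Lambda> g x * \<Psi>X g h x) = \<Psi>Y g h (f x) * \<Lambda> (g \<otimes>\<^bsub>G\<^esub> h) x"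
      using spent[OF o1 o2 o3] by simp
    have nz1: "\<Psi>X g h x \<noteq> 0" using assms(6) gh unfolding module_cochain_def by blast
    have nz2: "\<Lambda> (g \<otimes>\<^bsub>G\<^esub> h) x \<noteq> 0" using Lnz[OF ghc gh(3)] .
    show ?thesis using eq nz1 nz2 by (simp add: field_simps)
  qed
  have isF: "is_F_f_Lambda G X \<phi>X \<phi>Y f \<Lambda> Fo sH"
    unfolding is_F_f_Lambda_def
  proof (rule conjI; intro allI impI)
    fix V assume "gobj X V \<and> simple_obj V"
    then show "simple_obj (Fo V) \<and> sgrade (Fo V) = f (sgrade V)" using spF G2 by blast
  next
    fix C M assume th: "gobj (carrier G) C \<and> simple_obj C \<and> gobj X M \<and> simple_obj M"
    then show "sH C M (the_elem (fst (act \<phi>Y C (Fo M)))) (the_elem (fst (Fo (act \<phi>X C M))))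
        = \<Lambda> (sgrade C) (\<phi>X (sgrade C) (sgrade M))"
      using P2[of C M] unfolding sHe_def ent_def by blast
  qed
  show ?thesis
    apply (rule exI[of _ f], rule exI[of _ \<Lambda>], rule exI[of _ Fo], rule exI[of _ Hm], rule exI[of _ sH], rule exI[of _ \<eta>])
    using fXY equiv Lnz coc MFH isF T by blast
qed

end
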